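(* For all $\rho,\sigma\in S_n$, all $\rho$-fixed $\vec a$ and $\sigma$-fixed $\vec b$, the (untwisted) defect fusion product is $S_n$-crossed: $X^\rho_{\vec a}\otimes X^\sigma_{\vec b}=\rho\cdot X^\sigma_{\vec b}\otimes X^\rho_{\vec a}$.
   Context: Let $\mathcal{C}$ be a modular tensor category, $\mathrm{Irr}(\mathcal{C})$ its finite set of isomorphism classes of simple objects (containing $1$), $a\mapsto a^*$ duality, $C$ its fusion ring (free $\mathbb{Z}$-module on $\mathrm{Irr}(\mathcal{C})$, product $a\otimes b=\sum_cN_{ab}^cc$). Fix $n\ge2$. $C^{\boxtimes n}=C^{\otimes_{\mathbb{Z}}n}$ has basis the multilayer anyons $\vec a=a_1\boxtimes\cdots\boxtimes a_n$, layerwise product, unit $\vec1$; $S_n$ acts by permuting layers ($\rho$ moves layer $i$ to $\rho(i)$); permutations compose right to left. For $\sigma\in S_n$ with orbits $\mathcal{O}(\sigma)$ (cycles incl. fixed points), $\vec a$ is $\sigma$-fixed iff constant on orbits. $C_\sigma$: free $\mathbb{Z}$-module on symbols $X^\sigma_{\vec a}$ ($\vec a$ $\sigma$-fixed), identified with $R_\sigma=\bigotimes_{O\in\mathcal{O}(\sigma)}C$ via $X^\sigma_{\vec a}\leftrightarrow\bigotimes_Oa_O$; $X^\sigma_r$ for $r\in R_\sigma$. $C_{\mathrm{id}}=C^{\boxtimes n}$, $C^\times_{S_n}=\bigoplus_\sigma C_\sigma$; $S_n$-action $\rho\cdot X^\sigma_{\vec a}=X^{\rho\sigma\rho^{-1}}_{\rho\cdot\vec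 a}$. Confinement $c_\sigma:C^{\boxtimes n}\to R_\sigma$, linear, $c_\sigma(\vec a)=\bigotimes_O(\bigotimes_{k\in O}a_k)$. Anyon–defect fusion $\vec a\otimes X^\sigma_{\vec b}=X^\sigma_{\vec b}\otimes\vec a:=X^\sigma_{c_\sigma(\vec a)\cdot\vec b}$. A $\sigma$-deconfinement $d_\sigma(\vec b)$: any $d\in C^{\boxtimes n}$ with nonnegative coefficients and $d\otimes X^\sigma_{\vec1}=X^\sigma_{\vec b}$. For $t=(ij)$, $\Omega_t=\sum_{c\in\mathrm{Irr}(\mathcal{C})}\vec e_c$ ($c$ in layer $i$, $c^*$ in layer $j$, $1$ elsewhere). Following the paper's algorithm, $F(\rho,\sigma)\in C^{\boxtimes n}$: write $\rho=t_1\cdots t_m$ with each disjoint cycle $(i_1\cdots i_l)$ of $\rho$ written as $(i_1i_2)(i_2i_3)\cdots(i_{l-1}i_l)$; $\pi_{m+1}=\sigma$, $\pi_k=t_k\pi_{k+1}$; $F=\prod\Omega_{t_k}$ over $k$ with both indices of $t_k$ in a common cycle of $\pi_{k+1}$. The defect fusion product is bilinear with $X^\rho_{\vec a}\otimes X^\sigma_{\vec b}:=(d_\rho(\vec a)\otimes d_\sigma(\vec b)\otimes F(\rho,\sigma))\otimes X^{\rho\sigma}_{\vec1}$ (when $\rho\sigma=\mathrm{id}$ this is an element of $C^{\boxtimes n}$). *)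

theory Defs
  imports "HOL-Combinatorics.Combinatorics"
begin

text \<open>Simple objects = the finite type 'l; one = tensor unit; dual = duality;
  N a b c = fusion multiplicity N_{ab}^c.\<close>

definition fusion_ring :: "'l::finite \<Rightarrow> ('l \<Rightarrow> 'l) \<Rightarrow> ('l \<Rightarrow> 'l \<Rightarrow> 'l \<Rightarrow> nat) \<Rightarrow> bool" where
  "fusion_ring one dual N \<longleftrightarrow>
     (\<forall>a. dual (dual a) = a) \<and> dual one = one \<and>
     (\<forall>a c. N one a c = (if a = c then 1 else 0)) \<and>
     (\<forall>a b c. N a b c = N b a c) \<and>
     (\<forall>a b c d. (\<Sum>e\<in>UNIV. N a b e * N e c d) = (\<Sum>e\<in>UNIV. N b c e * N a e d)) \<and>
     (\<forall>a b. N a b one = (if b = dual a then 1 else 0)) \<and>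
     (\<forall>a b c. N a b c = N (dual a) c b) \<and>
     (\<forall>a b c. N (dual a) (dual b) (dual c) = N a b c)"

text \<open>A multilayer anyon is a function nat => 'l equal to one outside the layers {..<n}.\<close>
definition vecs :: "'l \<Rightarrow> nat \<Rightarrow> (nat \<Rightarrow> 'l) set" where
  "vecs one n = {a. \<forall>i\<ge>n. a i = one}"

definition unitvec :: "'l \<Rightarrow> nat \<Rightarrow> 'l" where
  "unitvec one = (\<lambda>i. one)"

definition fixvecs :: "'l \<Rightarrow> nat \<Rightarrow> (nat \<Rightarrow> nat) \<Rightarrow> (nat \<Rightarrow> 'l) set" where
  "fixvecs one n \<sigma> = {a \<in> vecs one n. \<forall>i<n. a (\<sigma> i) = a i}"

definition orbits :: "nat \<Rightarrow> (nat \<Rightarrow> nat) \<Rightarrow> nat set set" where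
  "orbits n \<sigma> = (\<lambda>i. range (\<lambda>k. (\<sigma> ^^ k) i)) ` {..<n}"

definition basis :: "'v \<Rightarrow> 'v \<Rightarrow> int" where
  "basis v = (\<lambda>w. if w = v then 1 else 0)"

text \<open>Elements of C^{boxtimes n}: integer coefficient functions on multilayer anyons,
  zero off vecs.  Layerwise product:\<close>
definition mulC :: "'l::finite \<Rightarrow> ('l \<Rightarrow> 'l \<Rightarrow> 'l \<Rightarrow> nat) \<Rightarrow> nat
    \<Rightarrow> ((nat \<Rightarrow> 'l) \<Rightarrow> int) \<Rightarrow> ((nat \<Rightarrow> 'l) \<Rightarrow> int) \<Rightarrow> ((nat \<Rightarrow> 'l) \<Rightarrow> int)" where
  "mulC one N n x y = (\<lambda>c. if c \<in> vecs one n then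
      (\<Sum>a\<in>vecs one n. \<Sum>b\<in>vecs one n. x a * y b * (\<Prod>i<n. int (N (a i) (b i) (c i))))
     else 0)"

text \<open>Elements of R_sigma = C_sigma: integer coefficient functions on sigma-fixed anyons
  (X^sigma_a identified with a), zero elsewhere.  Orbitwise product:\<close>
definition mulR :: "'l::finite \<Rightarrow> ('l \<Rightarrow> 'l \<Rightarrow> 'l \<Rightarrow> nat) \<Rightarrow> nat \<Rightarrow> (nat \<Rightarrow> nat)
    \<Rightarrow> ((nat \<Rightarrow> 'l) \<Rightarrow> int) \<Rightarrow> ((nat \<Rightarrow> 'l) \<Rightarrow> int) \<Rightarrow> ((nat \<Rightarrow> 'l) \<Rightarrow> int)" where
  "mulR one N n \<sigma> r s = (\<lambda>c. if c \<in> fixvecs one n \<sigma> then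
      (\<Sum>a\<in>fixvecs one n \<sigma>. \<Sum>b\<in>fixvecs one n \<sigma>. r a * s b *
          (\<Prod>Ob\<in>orbits n \<sigma>. int (N (a (Min Ob)) (b (Min Ob)) (c (Min Ob)))))
     else 0)"

fun fusl :: "'l::finite \<Rightarrow> ('l \<Rightarrow> 'l \<Rightarrow> 'l \<Rightarrow> nat) \<Rightarrow> 'l list \<Rightarrow> 'l \<Rightarrow> int" where
  "fusl one N [] = basis one"
| "fusl one N (a # as) = (\<lambda>c. \<Sum>e\<in>UNIV. int (N a e c) * fusl one N as e)"

text \<open>Confinement c_sigma : C^{boxtimes n} -> R_sigma, linear extension of
  c_sigma(a) = tensor over orbits O of (tensor_{k in O} a_k).\<close>
definition conf :: "'l::finite \<Rightarrow> ('l \<Rightarrow> 'l \<Rightarrow> 'l \<Rightarrow> nat) \<Rightarrow> nat \<Rightarrow> (nat \<Rightarrow> nat)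
    \<Rightarrow> ((nat \<Rightarrow> 'l) \<Rightarrow> int) \<Rightarrow> ((nat \<Rightarrow> 'l) \<Rightarrow> int)" where
  "conf one N n \<sigma> x = (\<lambda>c. if c \<in> fixvecs one n \<sigma> then
      (\<Sum>a\<in>vecs one n. x a *
          (\<Prod>Ob\<in>orbits n \<sigma>. fusl one N (map a (sorted_list_of_set Ob)) (c (Min Ob))))
     else 0)"

text \<open>Anyon-defect fusion: x (in C^{boxtimes n}) fused with X^sigma_r (r in R_sigma)
  is X^sigma_{c_sigma(x) r}.\<close>
definition ad_fuse :: "'l::finite \<Rightarrow> ('l \<Rightarrow> 'l \<Rightarrow> 'l \<Rightarrow> nat) \<Rightarrow> nat \<Rightarrow> (nat \<Rightarrow> nat)
    \<Rightarrow> ((nat \<Rightarrow> 'l) \<Rightarrow> int) \<Rightarrow> ((nat \<Rightarrow> 'l) \<Rightarrow> int) \<Rightarrow> ((nat \<Rightarrow> 'l) \<Rightarrow> int)" where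
  "ad_fuse one N n \<sigma> x r = mulR one N n \<sigma> (conf one N n \<sigma> x) r"

text \<open>d is a sigma-deconfinement of b: d in C^{boxtimes n} with nonnegative coefficients
  and d fused with X^sigma_1 equal to X^sigma_b.\<close>
definition is_deconf :: "'l::finite \<Rightarrow> ('l \<Rightarrow> 'l \<Rightarrow> 'l \<Rightarrow> nat) \<Rightarrow> nat \<Rightarrow> (nat \<Rightarrow> nat)
    \<Rightarrow> (nat \<Rightarrow> 'l) \<Rightarrow> ((nat \<Rightarrow> 'l) \<Rightarrow> int) \<Rightarrow> bool" where
  "is_deconf one N n \<sigma> b d \<longleftrightarrow>
     (\<forall>v. v \<notin> vecs one n \<longrightarrow> d v = 0) \<and> (\<forall>v. 0 \<le> d v) \<and>
     ad_fuse one N n \<sigma> d (basis (unitvec one)) = basis b"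

definition Omega :: "'l::finite \<Rightarrow> ('l \<Rightarrow> 'l) \<Rightarrow> nat \<Rightarrow> nat \<Rightarrow> ((nat \<Rightarrow> 'l) \<Rightarrow> int)" where
  "Omega one dual i j = (\<lambda>v. \<Sum>c\<in>UNIV. basis ((unitvec one)(i := c, j := dual c)) v)"

text \<open>Any order of cycles and any starting points are allowed.\<close>
definition cycle_decomp :: "nat \<Rightarrow> (nat \<Rightarrow> nat) \<Rightarrow> nat list list \<Rightarrow> bool" where
  "cycle_decomp n \<rho> cs \<longleftrightarrow>
     distinct (concat cs) \<and>
     (\<forall>cl\<in>set cs. cl \<noteq> [] \<and> (\<forall>k<length cl. \<rho> (cl ! k) = cl ! ((k + 1) mod length cl))) \<and>
     (\<forall>i<n. \<rho> i \<noteq> i \<longrightarrow> i \<in> set (concat cs))"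

definition transp_list :: "nat list list \<Rightarrow> (nat \<times> nat) list" where
  "transp_list cs = concat (map (\<lambda>cl. zip cl (tl cl)) cs)"

text \<open>Product t_1 ... t_m (composition right to left).\<close>
definition tprod :: "(nat \<times> nat) list \<Rightarrow> nat \<Rightarrow> nat" where
  "tprod ts = foldr (\<lambda>(i, j) f. transpose i j \<circ> f) ts id"

definition same_cycle :: "(nat \<Rightarrow> nat) \<Rightarrow> nat \<Rightarrow> nat \<Rightarrow> bool" where
  "same_cycle \<pi> i j \<longleftrightarrow> (\<exists>k. (\<pi> ^^ k) i = j)"

text \<open>Fcalc ts sigma: with pi_{m+1} = sigma, pi_k = t_k pi_{k+1}, the product of
  Omega_{t_k} over those k whose two indices lie in a common cycle of pi_{k+1}.\<close>
fun Fcalc :: "'l::finite \<Rightarrow> ('l \<Rightarrow> 'l) \<Rightarrow> ('l \<Rightarrow> 'l \<Rightarrow> 'l \<Rightarrow> nat) \<Rightarrow> nat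
    \<Rightarrow> (nat \<times> nat) list \<Rightarrow> (nat \<Rightarrow> nat) \<Rightarrow> ((nat \<Rightarrow> 'l) \<Rightarrow> int)" where
  "Fcalc one dual N n [] \<sigma> = basis (unitvec one)"
| "Fcalc one dual N n ((i, j) # ts) \<sigma> =
     mulC one N n
       (if same_cycle (tprod ts \<circ> \<sigma>) i j then Omega one dual i j else basis (unitvec one))
       (Fcalc one dual N n ts \<sigma>)"

definition Ftw :: "'l::finite \<Rightarrow> ('l \<Rightarrow> 'l) \<Rightarrow> ('l \<Rightarrow> 'l \<Rightarrow> 'l \<Rightarrow> nat) \<Rightarrow> nat
    \<Rightarrow> nat list list \<Rightarrow> (nat \<Rightarrow> nat) \<Rightarrow> ((nat \<Rightarrow> 'l) \<Rightarrow> int)" where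
  "Ftw one dual N n cs \<sigma> = Fcalc one dual N n (transp_list cs) \<sigma>"

text \<open>X^rho_a (x) X^sigma_b computed with deconfinements d1 = d_rho(a), d2 = d_sigma(b) and
  the cycle decomposition cs of rho used to compute F(rho, sigma); the result is the
  defect (rho sigma, element of R_{rho sigma}).\<close>
definition defect_prod :: "'l::finite \<Rightarrow> ('l \<Rightarrow> 'l) \<Rightarrow> ('l \<Rightarrow> 'l \<Rightarrow> 'l \<Rightarrow> nat) \<Rightarrow> nat
    \<Rightarrow> (nat \<Rightarrow> nat) \<Rightarrow> (nat \<Rightarrow> nat) \<Rightarrow> ((nat \<Rightarrow> 'l) \<Rightarrow> int) \<Rightarrow> ((nat \<Rightarrow> 'l) \<Rightarrow> int)
    \<Rightarrow> nat list list \<Rightarrow> (nat \<Rightarrow> nat) \<times> ((nat \<Rightarrow> 'l) \<Rightarrow> int)" where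
  "defect_prod one dual N n \<rho> \<sigma> d1 d2 cs =
     (\<rho> \<circ> \<sigma>, ad_fuse one N n (\<rho> \<circ> \<sigma>)
                 (mulC one N n (mulC one N n d1 d2) (Ftw one dual N n cs \<sigma>))
                 (basis (unitvec one)))"

text \<open>S_n action on anyons: rho moves layer i to rho(i).\<close>
definition act_vec :: "(nat \<Rightarrow> nat) \<Rightarrow> (nat \<Rightarrow> 'l) \<Rightarrow> (nat \<Rightarrow> 'l)" where
  "act_vec \<rho> a = a \<circ> inv \<rho>"

end

theory Submission
  imports Defs
begin

locale FR =
  fixes one :: "'l::finite" and dual :: "'l \<Rightarrow> 'l" and N :: "'l \<Rightarrow> 'l \<Rightarrow> 'l \<Rightarrow> nat"
  assumes fr: "fusion_ring one dual N"
begin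

lemma dd[simp]: "dual (dual a) = a" using fr unfolding fusion_ring_def by blast
lemma dual_one[simp]: "dual one = one" using fr unfolding fusion_ring_def by blast
lemma None: "N one a c = (if a = c then 1 else 0)" using fr unfolding fusion_ring_def by blast
lemma Ncomm: "N a b c = N b a c" using fr unfolding fusion_ring_def by blast
lemma Nassoc: "(\<Sum>e\<in>UNIV. N a b e * N e c d) = (\<Sum>e\<in>UNIV. N b c e * N a e d)"
  using fr unfolding fusion_ring_def by blast
lemma Nunit: "N a b one = (if b = dual a then 1 else 0)" using fr unfolding fusion_ring_def by blast
lemma dual_inj[simp]: "dual a = dual b \<longleftrightarrow> a = b" by (metis dd)

definition star :: "('l \<Rightarrow> int) \<Rightarrow> ('l \<Rightarrow> int) \<Rightarrow> ('l \<Rightarrow> int)" where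
  "star x y = (\<lambda>c. \<Sum>a\<in>UNIV. \<Sum>b\<in>UNIV. x a * y b * int (N a b c))"

abbreviation "del \<equiv> (basis :: 'l \<Rightarrow> 'l \<Rightarrow> int)"

lemma basis_apply: "basis a c = (if c = a then 1 else 0)" by (simp add: basis_def)

lemma star_comm: "star x y = star y x"
  unfolding star_def by (rule ext, subst sum.swap) (simp add: Ncomm mult_ac)

lemma sum_delta_mult: "(\<Sum>a\<in>UNIV. (if a = (k::'l) then 1 else 0) * (g a :: int)) = g k"
proof -
  have "(\<Sum>a\<in>UNIV. (if a = k then 1 else 0) * (g a :: int)) = (\<Sum>a\<in>UNIV. if a = k then g a else 0)"
    by (rule sum.cong) auto
  also have "\<dots> = g k" by (simp add: sum.delta)
  finally show ?thesis .
qed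

lemma star_del_left: "star (del k) y c = (\<Sum>b\<in>UNIV. y b * int (N k b c))"
proof -
  have "star (del k) y c = (\<Sum>a\<in>UNIV. (if a = k then 1 else 0) * (\<Sum>b\<in>UNIV. y b * int (N a b c)))"
    unfolding star_def basis_apply by (simp add: sum_distrib_left mult_ac)
  also have "\<dots> = (\<Sum>b\<in>UNIV. y b * int (N k b c))" by (rule sum_delta_mult)
  finally show ?thesis .
qed

lemma star_unit: "star (del one) x = x"
proof
  fix c
  have "star (del one) x c = (\<Sum>b\<in>UNIV. x b * int (N one b c))"
    by (rule star_del_left)
  also have "\<dots> = (\<Sum>b\<in>UNIV. (if b = c then 1 else 0) * x b)"
    by (rule sum.cong) (auto simp: None)
  also have "\<dots> = x c" by (rule sum_delta_mult)
  finally show "star (del one) x c = x c" .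
qed

lemma sum4: fixes f :: "'a \<Rightarrow> 'b \<Rightarrow> 'c \<Rightarrow> 'd \<Rightarrow> int"
  shows "(\<Sum>e\<in>E. \<Sum>c\<in>C. \<Sum>a\<in>A. \<Sum>b\<in>B. f e c a b) = (\<Sum>a\<in>A. \<Sum>b\<in>B. \<Sum>c\<in>C. \<Sum>e\<in>E. f e c a b)"
proof -
  have "(\<Sum>e\<in>E. \<Sum>c\<in>C. \<Sum>a\<in>A. \<Sum>b\<in>B. f e c a b) = (\<Sum>e\<in>E. \<Sum>a\<in>A. \<Sum>c\<in>C. \<Sum>b\<in>B. f e c a b)"
    by (rule sum.cong[OF refl], rule sum.swap)
  also have "\<dots> = (\<Sum>a\<in>A. \<Sum>e\<in>E. \<Sum>c\<in>C. \<Sum>b\<in>B. f e c a b)" by (rule sum.swap)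
  also have "\<dots> = (\<Sum>a\<in>A. \<Sum>e\<in>E. \<Sum>b\<in>B. \<Sum>c\<in>C. f e c a b)"
    by (rule sum.cong[OF refl], rule sum.cong[OF refl], rule sum.swap)
  also have "\<dots> = (\<Sum>a\<in>A. \<Sum>b\<in>B. \<Sum>e\<in>E. \<Sum>c\<in>C. f e c a b)"
    by (rule sum.cong[OF refl], rule sum.swap)
  also have "\<dots> = (\<Sum>a\<in>A. \<Sum>b\<in>B. \<Sum>c\<in>C. \<Sum>e\<in>E. f e c a b)"
    by (rule sum.cong[OF refl], rule sum.cong[OF refl], rule sum.swap)
  finally show ?thesis .
qed

lemma sum3: fixes f :: "'a \<Rightarrow> 'b \<Rightarrow> 'c \<Rightarrow> int"
  shows "(\<Sum>e\<in>E. \<Sum>b\<in>B. \<Sum>c\<in>C. f e b c) = (\<Sum>b\<in>B. \<Sum>c\<in>C. \<Sum>e\<in>E. f e b c)"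
proof -
  have "(\<Sum>e\<in>E. \<Sum>b\<in>B. \<Sum>c\<in>C. f e b c) = (\<Sum>b\<in>B. \<Sum>e\<in>E. \<Sum>c\<in>C. f e b c)"
    by (rule sum.swap)
  also have "\<dots> = (\<Sum>b\<in>B. \<Sum>c\<in>C. \<Sum>e\<in>E. f e b c)"
    by (rule sum.cong[OF refl], rule sum.swap)
  finally show ?thesis .
qed

lemma star_assoc: "star (star x y) z = star x (star y z)"
proof
  fix d
  have "star (star x y) z d = (\<Sum>e\<in>UNIV. \<Sum>c\<in>UNIV. \<Sum>a\<in>UNIV. \<Sum>b\<in>UNIV. x a * y b * z c * (int (N a b e) * int (N e c d)))"
    unfolding star_def by (simp add: sum_distrib_right sum_distrib_left mult_ac)
  also have "\<dots> = (\<Sum>a\<in>UNIV. \<Sum>b\<in>UNIV. \<Sum>c\<in>UNIV. \<Sum>e\<in>UNIV. x a * y b * z c * (int (N a b e) * int (N e c d)))"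
    by (rule sum4)
  also have "\<dots> = (\<Sum>a\<in>UNIV. \<Sum>b\<in>UNIV. \<Sum>c\<in>UNIV. x a * y b * z c * int (\<Sum>e\<in>UNIV. N a b e * N e c d))"
    by (simp add: sum_distrib_left)
  also have "\<dots> = (\<Sum>a\<in>UNIV. \<Sum>b\<in>UNIV. \<Sum>c\<in>UNIV. x a * y b * z c * int (\<Sum>e\<in>UNIV. N b c e * N a e d))"
    by (simp only: Nassoc)
  also have "\<dots> = (\<Sum>a\<in>UNIV. \<Sum>b\<in>UNIV. \<Sum>c\<in>UNIV. \<Sum>e\<in>UNIV. x a * y b * z c * (int (N b c e) * int (N a e d)))"
    by (simp add: sum_distrib_left)
  also have "\<dots> = (\<Sum>a\<in>UNIV. \<Sum>e\<in>UNIV. \<Sum>b\<in>UNIV. \<Sum>c\<in>UNIV. x a * y b * z c * (int (N b c e) * int (N a e d)))"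
    by (rule sum.cong[OF refl], rule sum3[symmetric])
  also have "\<dots> = star x (star y z) d"
    unfolding star_def by (simp add: sum_distrib_right sum_distrib_left mult_ac)
  finally show "star (star x y) z d = star x (star y z) d" .
qed

sublocale BS: comm_monoid_set star "del one"
  apply unfold_locales
    apply (rule star_assoc)
   apply (rule star_comm)
  apply (subst star_comm, rule star_unit)
  done

lemma star_expand_left: "star X R c = (\<Sum>a\<in>UNIV. X a * star (del a) R c)"
  unfolding star_del_left unfolding star_def by (simp add: sum_distrib_left mult_ac)

lemma star_expand_right: "star X R c = (\<Sum>a\<in>UNIV. R a * star X (del a) c)"
proof -
  have "star X R c = star R X c" by (simp only: star_comm)
  also have "\<dots> = (\<Sum>a\<in>UNIV. R a * star (del a) X c)" by (rule star_expand_left)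
  also have "\<dots> = (\<Sum>a\<in>UNIV. R a * star X (del a) c)" by (simp only: star_comm)
  finally show ?thesis .
qed

lemma Nunit_int: "int (N a b one) = (if b = dual a then 1 else 0)" by (simp add: Nunit)

lemma star_sum_left: "star (\<lambda>z. \<Sum>i\<in>S. f i z) y c = (\<Sum>i\<in>S. star (f i) y c)"
  unfolding star_def
  by (simp add: sum_distrib_right sum_distrib_left mult_ac sum.swap[of _ S])

lemma star_smult_left: "star (\<lambda>z. k * f z) y c = k * star f y c"
  unfolding star_def by (simp add: sum_distrib_left mult_ac)

lemma star_del_right: "star X (del e) c = (\<Sum>a\<in>UNIV. X a * int (N a e c))"
  by (subst star_comm, simp add: star_del_left Ncomm mult_ac)

lemma eps_star_del: "star X (del e) one = X (dual e)"
proof -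
  have "star X (del e) one = (\<Sum>a\<in>UNIV. (if a = dual e then 1 else 0) * X a)"
    unfolding star_del_right by (rule sum.cong) (auto simp: Nunit Ncomm[of _ e])
  also have "\<dots> = X (dual e)" by (rule sum_delta_mult)
  finally show ?thesis .
qed

lemma eps_star: "star X Y one = (\<Sum>a\<in>UNIV. X a * Y (dual a))"
proof -
  have "star X Y one = (\<Sum>a\<in>UNIV. X a * (\<Sum>b\<in>UNIV. (if b = dual a then 1 else 0) * Y b))"
    unfolding star_def by (rule sum.cong) (auto simp: Nunit_int sum_distrib_left mult_ac)
  also have "\<dots> = (\<Sum>a\<in>UNIV. X a * Y (dual a))" by (simp only: sum_delta_mult)
  finally show ?thesis .
qed

lemma sum_dual_reindex: "(\<Sum>c\<in>UNIV. g (dual c)) = (\<Sum>c\<in>UNIV. (g c :: int))"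
  by (rule sum.reindex_bij_witness[of _ dual dual]) auto

lemma eps_merge: "(\<Sum>c\<in>UNIV. star X (del c) one * star Y (del (dual c)) one) = star X Y one"
proof -
  have "(\<Sum>c\<in>UNIV. star X (del c) one * star Y (del (dual c)) one) = (\<Sum>c\<in>UNIV. X (dual c) * Y c)"
    by (simp add: eps_star_del)
  also have "\<dots> = (\<Sum>c\<in>UNIV. X (dual (dual c)) * Y (dual c))"
    by (rule sum_dual_reindex[symmetric, of "\<lambda>c. X (dual c) * Y c"])
  also have "\<dots> = star X Y one" by (simp add: eps_star)
  finally show ?thesis .
qed

definition omega :: "'l \<Rightarrow> int" where
  "omega = (\<lambda>z. \<Sum>c\<in>UNIV. star (del c) (del (dual c)) z)"

lemma eval_eps: "X c = star X (del (dual c)) one"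
  by (simp add: eps_star_del)

end

locale FRn = FR one dual N for one :: "'l::finite" and dual N + fixes n :: nat
begin

abbreviation "V \<equiv> vecs one n"
definition ext :: "(nat \<Rightarrow> 'l) \<Rightarrow> nat \<Rightarrow> 'l" where "ext c = (\<lambda>i. if i < n then c i else one)"
definition PT :: "(nat \<Rightarrow> 'l \<Rightarrow> int) \<Rightarrow> (nat \<Rightarrow> 'l) \<Rightarrow> int" where
  "PT f = (\<lambda>v. if v \<in> V then (\<Prod>i<n. f i (v i)) else 0)"
definition supp :: "((nat \<Rightarrow> 'l) \<Rightarrow> int) \<Rightarrow> bool" where "supp x \<longleftrightarrow> (\<forall>v. v \<notin> V \<longrightarrow> x v = 0)"

lemma in_V: "v \<in> V \<longleftrightarrow> (\<forall>i\<ge>n. v i = one)" by (simp add: vecs_def)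

lemma V_bij: "bij_betw ext (PiE {..<n} (\<lambda>_. UNIV)) V"
  by (rule bij_betw_byWitness[of _ "\<lambda>v. restrict v {..<n}"])
     (auto simp: ext_def in_V PiE_def extensional_def fun_eq_iff)

lemma finite_V: "finite V"
proof -
  have "finite (PiE {..<n} (\<lambda>_. UNIV::'l set))" by (simp add: finite_PiE)
  thus ?thesis using bij_betw_finite[OF V_bij] by simp
qed

lemma sum_V_PiE: "(\<Sum>v\<in>V. g v) = (\<Sum>c\<in>PiE {..<n} (\<lambda>_. UNIV). g (ext c))"
  using sum.reindex_bij_betw[OF V_bij, of g] by simp

lemma sum_vecs_prod: "(\<Sum>v\<in>V. \<Prod>i<n. h i (v i)) = (\<Prod>i<n. \<Sum>x\<in>UNIV. (h i x :: int))"
proof -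
  have "(\<Sum>v\<in>V. \<Prod>i<n. h i (v i)) = (\<Sum>c\<in>PiE {..<n} (\<lambda>_. UNIV). \<Prod>i<n. h i (ext c i))"
    by (rule sum_V_PiE)
  also have "\<dots> = (\<Sum>c\<in>PiE {..<n} (\<lambda>_. UNIV). \<Prod>i<n. h i (c i))"
    by (rule sum.cong[OF refl], rule prod.cong[OF refl]) (simp add: ext_def)
  also have "\<dots> = (\<Prod>i<n. \<Sum>x\<in>UNIV. h i x)"
    by (rule prod_sum_PiE[symmetric]) auto
  finally show ?thesis .
qed

lemma unit_in_V: "unitvec one \<in> V" by (simp add: in_V unitvec_def)

lemma prod_delta_V: assumes "v \<in> V" "w \<in> V"
  shows "(\<Prod>i<n. del (v i) (w i)) = (if w = v then 1 else 0)"
proof (cases "w = v")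
  case True thus ?thesis by (simp add: basis_apply)
next
  case False
  then obtain i where "w i \<noteq> v i" by auto
  with assms have "i < n" by (metis in_V not_le)
  with \<open>w i \<noteq> v i\<close> have "del (v i) (w i) = 0" by (simp add: basis_apply)
  with \<open>i < n\<close> False show ?thesis by (metis finite_lessThan lessThan_iff prod_zero_iff)
qed

lemma basis_PT: assumes "v \<in> V" shows "basis v = PT (\<lambda>i. del (v i))"
proof
  fix w
  show "basis v w = PT (\<lambda>i. del (v i)) w"
  proof (cases "w \<in> V")
    case True thus ?thesis using prod_delta_V[OF assms True] by (simp add: PT_def basis_def)
  next
    case False thus ?thesis using assms by (auto simp: PT_def basis_def)
  qed
qed

lemma supp_PT: "supp (PT f)" by (simp add: supp_def PT_def)

lemma supp_mulC: "supp (mulC one N n x y)" by (simp add: supp_def mulC_def)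

lemma supp_basis: "v \<in> V \<Longrightarrow> supp (basis v)" by (auto simp: supp_def basis_def)

lemma mulC_comm: "mulC one N n x y = mulC one N n y x"
proof
  fix c
  have "(\<Sum>a\<in>V. \<Sum>b\<in>V. x a * y b * (\<Prod>i<n. int (N (a i) (b i) (c i)))) =
        (\<Sum>b\<in>V. \<Sum>a\<in>V. x a * y b * (\<Prod>i<n. int (N (a i) (b i) (c i))))"
    by (rule sum.swap)
  also have "\<dots> = (\<Sum>a\<in>V. \<Sum>b\<in>V. y a * x b * (\<Prod>i<n. int (N (a i) (b i) (c i))))"
    by (simp add: Ncomm mult_ac)
  finally show "mulC one N n x y c = mulC one N n y x c" unfolding mulC_def by simp
qed

lemma mulC_sum_left: "mulC one N n (\<lambda>v. \<Sum>j\<in>S. g j v) y c = (\<Sum>j\<in>S. mulC one N n (g j) y c)"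
  unfolding mulC_def by (simp add: sum_distrib_right sum.swap[of _ S])

lemma mulC_smult_left: "mulC one N n (\<lambda>v. k * g v) y c = k * mulC one N n g y c"
  unfolding mulC_def by (simp add: sum_distrib_left mult_ac)

lemma decomp: assumes "supp x" shows "x = (\<lambda>w. \<Sum>v\<in>V. x v * PT (\<lambda>i. del (v i)) w)"
proof
  fix w
  show "x w = (\<Sum>v\<in>V. x v * PT (\<lambda>i. del (v i)) w)"
  proof (cases "w \<in> V")
    case True
    have "(\<Sum>v\<in>V. x v * PT (\<lambda>i. del (v i)) w) = (\<Sum>v\<in>V. if v = w then x v else 0)"
      by (rule sum.cong[OF refl]) (use True prod_delta_V in \<open>auto simp: PT_def\<close>)
    also have "\<dots> = x w" using True by (simp add: sum.delta finite_V)
    finally show ?thesis by simp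
  next
    case False thus ?thesis using assms by (simp add: PT_def supp_def)
  qed
qed

lemma mulC_PT_left: "mulC one N n (PT f) Y c = (\<Sum>w\<in>V. Y w * PT (\<lambda>i. star (f i) (del (w i))) c)"
proof (cases "c \<in> V")
  case True
  have "mulC one N n (PT f) Y c = (\<Sum>a\<in>V. \<Sum>b\<in>V. Y b * (\<Prod>i<n. f i (a i) * int (N (a i) (b i) (c i))))"
    using True unfolding mulC_def PT_def
    by (simp add: prod.distrib mult_ac)
  also have "\<dots> = (\<Sum>b\<in>V. \<Sum>a\<in>V. Y b * (\<Prod>i<n. f i (a i) * int (N (a i) (b i) (c i))))"
    by (rule sum.swap)
  also have "\<dots> = (\<Sum>b\<in>V. Y b * (\<Sum>a\<in>V. \<Prod>i<n. f i (a i) * int (N (a i) (b i) (c i))))"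
    by (simp add: sum_distrib_left)
  also have "\<dots> = (\<Sum>b\<in>V. Y b * (\<Prod>i<n. \<Sum>x\<in>UNIV. f i x * int (N x (b i) (c i))))"
    apply (rule sum.cong[OF refl])
    subgoal for b using sum_vecs_prod[of "\<lambda>i x. f i x * int (N x (b i) (c i))"] by simp
    done
  also have "\<dots> = (\<Sum>w\<in>V. Y w * PT (\<lambda>i. star (f i) (del (w i))) c)"
    using True by (simp add: PT_def star_del_right)
  finally show ?thesis .
next
  case False thus ?thesis by (simp add: mulC_def PT_def)
qed

lemma mulC_PT_PT: "mulC one N n (PT f) (PT g) = PT (\<lambda>i. star (f i) (g i))"
proof
  fix c
  show "mulC one N n (PT f) (PT g) c = PT (\<lambda>i. star (f i) (g i)) c"
  proof (cases "c \<in> V")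
    case True
    have "mulC one N n (PT f) (PT g) c = (\<Sum>w\<in>V. \<Prod>i<n. g i (w i) * star (f i) (del (w i)) (c i))"
      unfolding mulC_PT_left using True by (simp add: PT_def prod.distrib)
    also have "\<dots> = (\<Prod>i<n. \<Sum>x\<in>UNIV. g i x * star (f i) (del x) (c i))"
      by (rule sum_vecs_prod)
    also have "\<dots> = PT (\<lambda>i. star (f i) (g i)) c"
      using True unfolding PT_def by (simp add: star_expand_right[of "f _" "g _"])
    finally show ?thesis .
  next
    case False thus ?thesis by (simp add: mulC_def PT_def)
  qed
qed

abbreviation "PP a b c \<equiv> (\<Prod>i<n. int (N (a i) (b i) (c i)))"

lemma PP_assoc: "(\<Sum>e\<in>V. PP a b e * PP e u c) = (\<Sum>e\<in>V. PP b u e * PP a e c)"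
proof -
  have "(\<Sum>e\<in>V. PP a b e * PP e u c) = (\<Sum>e\<in>V. \<Prod>i<n. int (N (a i) (b i) (e i)) * int (N (e i) (u i) (c i)))"
    by (simp add: prod.distrib)
  also have "\<dots> = (\<Prod>i<n. \<Sum>x\<in>UNIV. int (N (a i) (b i) x) * int (N x (u i) (c i)))"
    by (rule sum_vecs_prod)
  also have "\<dots> = (\<Prod>i<n. \<Sum>x\<in>UNIV. int (N (b i) (u i) x) * int (N (a i) x (c i)))"
  proof (rule prod.cong[OF refl])
    fix i
    have "(\<Sum>x\<in>UNIV. int (N (a i) (b i) x) * int (N x (u i) (c i))) = int (\<Sum>x\<in>UNIV. N (a i) (b i) x * N x (u i) (c i))"
      by simp
    also have "\<dots> = int (\<Sum>x\<in>UNIV. N (b i) (u i) x * N (a i) x (c i))" by (simp only: Nassoc)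
    finally show "(\<Sum>x\<in>UNIV. int (N (a i) (b i) x) * int (N x (u i) (c i))) = (\<Sum>x\<in>UNIV. int (N (b i) (u i) x) * int (N (a i) x (c i)))"
      by simp
  qed
  also have "\<dots> = (\<Sum>e\<in>V. \<Prod>i<n. int (N (b i) (u i) (e i)) * int (N (a i) (e i) (c i)))"
    by (rule sum_vecs_prod[symmetric])
  also have "\<dots> = (\<Sum>e\<in>V. PP b u e * PP a e c)"
    by (simp add: prod.distrib)
  finally show ?thesis .
qed

lemma mulC_assoc: "mulC one N n (mulC one N n x y) z = mulC one N n x (mulC one N n y z)"
proof
  fix c
  show "mulC one N n (mulC one N n x y) z c = mulC one N n x (mulC one N n y z) c"
  proof (cases "c \<in> V")
    case True
    have "mulC one N n (mulC one N n x y) z c =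
      (\<Sum>e\<in>V. \<Sum>u\<in>V. \<Sum>a\<in>V. \<Sum>b\<in>V. x a * y b * z u * (PP a b e * PP e u c))"
      using True unfolding mulC_def
      by (simp add: sum_distrib_left sum_distrib_right mult_ac cong: sum.cong)
    also have "\<dots> = (\<Sum>a\<in>V. \<Sum>b\<in>V. \<Sum>u\<in>V. \<Sum>e\<in>V. x a * y b * z u * (PP a b e * PP e u c))"
      by (rule sum4)
    also have "\<dots> = (\<Sum>a\<in>V. \<Sum>b\<in>V. \<Sum>u\<in>V. x a * y b * z u * (\<Sum>e\<in>V. PP a b e * PP e u c))"
      by (simp add: sum_distrib_left)
    also have "\<dots> = (\<Sum>a\<in>V. \<Sum>b\<in>V. \<Sum>u\<in>V. x a * y b * z u * (\<Sum>e\<in>V. PP b u e * PP a e c))"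
      by (simp only: PP_assoc)
    also have "\<dots> = (\<Sum>a\<in>V. \<Sum>b\<in>V. \<Sum>u\<in>V. \<Sum>e\<in>V. x a * y b * z u * (PP b u e * PP a e c))"
      by (simp add: sum_distrib_left)
    also have "\<dots> = (\<Sum>a\<in>V. \<Sum>e\<in>V. \<Sum>b\<in>V. \<Sum>u\<in>V. x a * y b * z u * (PP b u e * PP a e c))"
      by (rule sum.cong[OF refl], rule sum3[symmetric])
    also have "\<dots> = mulC one N n x (mulC one N n y z) c"
      using True unfolding mulC_def
      by (simp add: sum_distrib_left sum_distrib_right mult_ac cong: sum.cong)
    finally show ?thesis .
  next
    case False thus ?thesis by (simp add: mulC_def)
  qed
qed

lemma mulC_unit: assumes "supp X" shows "mulC one N n (basis (unitvec one)) X = X"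
proof
  fix c
  have "mulC one N n (basis (unitvec one)) X c = mulC one N n (PT (\<lambda>i. del one)) X c"
    using basis_PT[OF unit_in_V] by (simp add: unitvec_def)
  also have "\<dots> = (\<Sum>w\<in>V. X w * PT (\<lambda>i. del (w i)) c)"
    by (simp add: mulC_PT_left star_unit)
  also have "\<dots> = X c" using decomp[OF assms] by metis
  finally show "mulC one N n (basis (unitvec one)) X c = X c" .
qed

end

context FRn begin

definition blocks :: "(nat \<times> nat) set \<Rightarrow> nat set set" where
  "blocks r = (\<lambda>x. r `` {x}) ` {..<n}"

definition part :: "(nat \<times> nat) set \<Rightarrow> bool" where
  "part r \<longleftrightarrow> equiv UNIV r \<and> (\<forall>x y. (x, y) \<in> r \<longrightarrow> (x < n \<longleftrightarrow> y < n))"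

definition TP :: "(nat \<times> nat) set \<Rightarrow> (nat \<Rightarrow> 'l \<Rightarrow> int) \<Rightarrow> int" where
  "TP r f = (\<Prod>B\<in>blocks r. BS.F f B one)"

definition Tlin :: "(nat \<times> nat) set \<Rightarrow> ((nat \<Rightarrow> 'l) \<Rightarrow> int) \<Rightarrow> int" where
  "Tlin r x = (\<Sum>v\<in>V. x v * TP r (\<lambda>i. del (v i)))"

lemma part_refl: "part r \<Longrightarrow> (x, x) \<in> r"
  unfolding part_def equiv_def refl_on_def by blast
lemma part_sym: "part r \<Longrightarrow> (x, y) \<in> r \<Longrightarrow> (y, x) \<in> r"
  unfolding part_def equiv_def sym_def by blast
lemma part_trans: "part r \<Longrightarrow> (x, y) \<in> r \<Longrightarrow> (y, z) \<in> r \<Longrightarrow> (x, z) \<in> r"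
  unfolding part_def equiv_def trans_def by blast
lemma part_lt: "part r \<Longrightarrow> (x, y) \<in> r \<Longrightarrow> x < n \<Longrightarrow> y < n"
  unfolding part_def by blast

lemma part_cls_eq: "part r \<Longrightarrow> (x, y) \<in> r \<Longrightarrow> r `` {x} = r `` {y}"
  by (auto intro: part_trans part_sym)

lemma blocks_finite: "finite (blocks r)" by (simp add: blocks_def)

lemma block_sub: "part r \<Longrightarrow> B \<in> blocks r \<Longrightarrow> B \<subseteq> {..<n}"
  unfolding blocks_def by (auto intro: part_lt)

lemma block_finite: "part r \<Longrightarrow> B \<in> blocks r \<Longrightarrow> finite B"
  using block_sub finite_subset by blast

lemma block_of: "part r \<Longrightarrow> k < n \<Longrightarrow> r `` {k} \<in> blocks r \<and> k \<in> r `` {k}"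
  unfolding blocks_def by (auto intro: part_refl)

lemma block_uniq: "part r \<Longrightarrow> B \<in> blocks r \<Longrightarrow> k \<in> B \<Longrightarrow> B = r `` {k}"
  unfolding blocks_def using part_cls_eq by fastforce

lemma block_ne: "part r \<Longrightarrow> B \<in> blocks r \<Longrightarrow> B \<noteq> {}"
  unfolding blocks_def by (auto intro: part_refl)

lemma star_del_one_right: "star X (del one) = X"
  by (subst star_comm) (rule star_unit)

lemma lin_prod:
  fixes X :: "'i \<Rightarrow> 'l \<Rightarrow> int" and J :: "'b \<Rightarrow> 'i set"
  assumes "finite P" "B0 \<in> P" "k \<in> J B0" "\<And>B. B \<in> P \<Longrightarrow> B \<noteq> B0 \<Longrightarrow> k \<notin> J B" "finite (J B0)"
  shows "(\<Prod>B\<in>P. star (BS.F X (J B)) (Y B) one)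
       = (\<Sum>x\<in>UNIV. X k x * (\<Prod>B\<in>P. star (BS.F (X(k := del x)) (J B)) (Y B) one))"
proof -
  let ?R = "\<Prod>B\<in>P - {B0}. star (BS.F X (J B)) (Y B) one"
  have rest: "(\<Prod>B\<in>P - {B0}. star (BS.F (X(k := del x)) (J B)) (Y B) one) = ?R" for x
    by (rule prod.cong[OF refl]) (metis (no_types, lifting) BS.cong DiffE assms(4) fun_upd_other insertCI)
  have F0: "BS.F Z (J B0) = star (Z k) (BS.F Z (J B0 - {k}))" for Z :: "'i \<Rightarrow> 'l \<Rightarrow> int"
    using BS.remove[OF assms(5) assms(3)] .
  have F0': "BS.F (X(k := del x)) (J B0 - {k}) = BS.F X (J B0 - {k})" for x
    by (rule BS.cong) auto
  have "(\<Prod>B\<in>P. star (BS.F X (J B)) (Y B) one) = star (BS.F X (J B0)) (Y B0) one * ?R"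
    using prod.remove[OF assms(1,2)] .
  also have "star (BS.F X (J B0)) (Y B0) one = star (X k) (star (BS.F X (J B0 - {k})) (Y B0)) one"
    by (simp add: F0 star_assoc)
  also have "\<dots> = (\<Sum>x\<in>UNIV. X k x * star (del x) (star (BS.F X (J B0 - {k})) (Y B0)) one)"
    by (rule star_expand_left)
  also have "(\<Sum>x\<in>UNIV. X k x * star (del x) (star (BS.F X (J B0 - {k})) (Y B0)) one) * ?R
     = (\<Sum>x\<in>UNIV. X k x * (star (del x) (star (BS.F X (J B0 - {k})) (Y B0)) one * ?R))"
    by (simp only: sum_distrib_right mult.assoc)
  also have "\<dots> = (\<Sum>x\<in>UNIV. X k x * (star (BS.F (X(k := del x)) (J B0)) (Y B0) one *
          (\<Prod>B\<in>P - {B0}. star (BS.F (X(k := del x)) (J B)) (Y B) one)))"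
  proof (rule sum.cong[OF refl])
    fix x
    have "star (BS.F (X(k := del x)) (J B0)) (Y B0) = star (del x) (star (BS.F X (J B0 - {k})) (Y B0))"
      by (simp only: F0 F0' star_assoc fun_upd_same)
    thus "X k x * (star (del x) (star (BS.F X (J B0 - {k})) (Y B0)) one * ?R) =
      X k x * (star (BS.F (X(k := del x)) (J B0)) (Y B0) one *
          (\<Prod>B\<in>P - {B0}. star (BS.F (X(k := del x)) (J B)) (Y B) one))"
      by (simp only: rest)
  qed
  also have "\<dots> = (\<Sum>x\<in>UNIV. X k x * (\<Prod>B\<in>P. star (BS.F (X(k := del x)) (J B)) (Y B) one))"
  proof (rule sum.cong[OF refl])
    fix x
    show "X k x * (star (BS.F (X(k := del x)) (J B0)) (Y B0) one *
          (\<Prod>B\<in>P - {B0}. star (BS.F (X(k := del x)) (J B)) (Y B) one)) =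
          X k x * (\<Prod>B\<in>P. star (BS.F (X(k := del x)) (J B)) (Y B) one)"
      using prod.remove[OF assms(1,2), of "\<lambda>B. star (BS.F (X(k := del x)) (J B)) (Y B) one"]
      by (simp only:)
  qed
  finally show ?thesis .
qed

lemma GEN:
  fixes G :: "('i \<Rightarrow> 'l \<Rightarrow> int) \<Rightarrow> int"
  assumes "finite I" "\<And>i X. i \<in> I \<Longrightarrow> G X = (\<Sum>x\<in>UNIV. X i x * G (X(i := del x)))"
  shows "G X = (\<Sum>c\<in>PiE I (\<lambda>_. UNIV). (\<Prod>i\<in>I. X i (c i)) * G (\<lambda>i. if i \<in> I then del (c i) else X i))"
  using assms
proof (induction I arbitrary: X rule: finite_induct)
  case empty thus ?case by simp
next
  case (insert i I)
  have IH: "G Z = (\<Sum>c\<in>PiE I (\<lambda>_. UNIV). (\<Prod>j\<in>I. Z j (c j)) * G (\<lambda>j. if j \<in> I then del (c j) else Z j))" for Z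
    using insert.IH insert.prems by blast
  have "G X = (\<Sum>x\<in>UNIV. X i x * G (X(i := del x)))" using insert.prems by blast
  also have "\<dots> = (\<Sum>x\<in>UNIV. X i x * (\<Sum>c\<in>PiE I (\<lambda>_. UNIV). (\<Prod>j\<in>I. X j (c j)) *
        G (\<lambda>j. if j \<in> insert i I then del ((c(i := x)) j) else X j)))"
  proof (rule sum.cong[OF refl])
    fix x
    have a: "(\<Prod>j\<in>I. (X(i := del x)) j (c j)) = (\<Prod>j\<in>I. X j (c j))" for c
      using insert.hyps(2) by (intro prod.cong) auto
    have b: "(\<lambda>j. if j \<in> I then del (c j) else (X(i := del x)) j) = (\<lambda>j. if j \<in> insert i I then del ((c(i := x)) j) else X j)" for c
      using insert.hyps(2) by (auto simp: fun_eq_iff)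
    show "X i x * G (X(i := del x)) = X i x * (\<Sum>c\<in>PiE I (\<lambda>_. UNIV). (\<Prod>j\<in>I. X j (c j)) *
        G (\<lambda>j. if j \<in> insert i I then del ((c(i := x)) j) else X j))"
      by (subst IH) (simp only: a b)
  qed
  also have "\<dots> = (\<Sum>(x, c)\<in>UNIV \<times> PiE I (\<lambda>_. UNIV). X i x * ((\<Prod>j\<in>I. X j (c j)) *
        G (\<lambda>j. if j \<in> insert i I then del ((c(i := x)) j) else X j)))"
    by (simp add: sum_distrib_left sum.cartesian_product)
  also have "\<dots> = (\<Sum>c\<in>PiE (insert i I) (\<lambda>_. UNIV). (\<Prod>j\<in>insert i I. X j (c j)) *
        G (\<lambda>j. if j \<in> insert i I then del (c j) else X j))"
    apply (rule sum.reindex_bij_witness[of _ "\<lambda>c. (c i, c(i := undefined))" "\<lambda>(x, c). c(i := x)"])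
    subgoal for b using insert.hyps(2) by (auto simp: PiE_def extensional_def)
    subgoal for b by (auto simp: PiE_def extensional_def)
    subgoal for a by simp
    subgoal for a using insert.hyps(2) by (auto simp: PiE_def extensional_def)
    subgoal for b
    proof -
      obtain x c where bc: "b = (x, c)" by (cases b)
      assume "b \<in> UNIV \<times> PiE I (\<lambda>_. UNIV)"
      hence ci: "c \<in> PiE I (\<lambda>_. UNIV)" using bc by auto
      have p: "(\<Prod>j\<in>I. X j (if j = i then x else c j)) = (\<Prod>j\<in>I. X j (c j))"
        using insert.hyps(2) by (intro prod.cong) auto
      show ?thesis using insert.hyps unfolding bc prod.case by (simp add: p mult_ac)
    qed
    done
  finally show ?case .
qed

lemma TP_alt: "TP r f = (\<Prod>B\<in>blocks r. star (BS.F f (id B)) (del one) one)"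
  unfolding TP_def by (simp add: star_del_one_right)

lemma TP_lin: assumes "part r" "k < n"
  shows "TP r X = (\<Sum>x\<in>UNIV. X k x * TP r (X(k := del x)))"
proof -
  have "TP r X = (\<Prod>B\<in>blocks r. star (BS.F X (id B)) ((\<lambda>_. del one) B) one)"
    by (simp add: TP_alt)
  also have "\<dots> = (\<Sum>x\<in>UNIV. X k x * (\<Prod>B\<in>blocks r. star (BS.F (X(k := del x)) (id B)) ((\<lambda>_. del one) B) one))"
  proof (rule lin_prod)
    show "finite (blocks r)" by (rule blocks_finite)
    show "r `` {k} \<in> blocks r" "k \<in> id (r `` {k})" using block_of[OF assms] by auto
    show "finite (id (r `` {k}))" using block_of[OF assms] block_finite[OF assms(1)] by auto
    fix B assume "B \<in> blocks r" "B \<noteq> r `` {k}"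
    thus "k \<notin> id B" using block_uniq[OF assms(1)] by auto
  qed
  also have "\<dots> = (\<Sum>x\<in>UNIV. X k x * TP r (X(k := del x)))"
    by (simp add: TP_alt)
  finally show ?thesis .
qed

lemma TP_cong: assumes "part r" "\<And>i. i < n \<Longrightarrow> f i = g i" shows "TP r f = TP r g"
  unfolding TP_def
proof (rule prod.cong[OF refl])
  fix B assume "B \<in> blocks r"
  hence "B \<subseteq> {..<n}" by (rule block_sub[OF assms(1)])
  hence "BS.F f B = BS.F g B" using assms(2) by (intro BS.cong) auto
  thus "BS.F f B one = BS.F g B one" by simp
qed

lemma PT_ext: "c \<in> PiE {..<n} (\<lambda>_. UNIV) \<Longrightarrow> PT f (ext c) = (\<Prod>i<n. f i (c i))"
  unfolding PT_def by (auto simp: in_V ext_def intro!: prod.cong)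

lemma Tlin_PT: assumes "part r" shows "Tlin r (PT f) = TP r f"
proof -
  have "TP r f = (\<Sum>c\<in>PiE {..<n} (\<lambda>_. UNIV). (\<Prod>i\<in>{..<n}. f i (c i)) * TP r (\<lambda>i. if i \<in> {..<n} then del (c i) else f i))"
    apply (rule GEN)
     apply simp
    apply (rule TP_lin[OF assms])
    apply simp
    done
  also have "\<dots> = (\<Sum>c\<in>PiE {..<n} (\<lambda>_. UNIV). PT f (ext c) * TP r (\<lambda>i. del (ext c i)))"
  proof (rule sum.cong[OF refl])
    fix c :: "nat \<Rightarrow> 'l" assume c: "c \<in> PiE {..<n} (\<lambda>_. UNIV)"
    have "TP r (\<lambda>i. if i \<in> {..<n} then del (c i) else f i) = TP r (\<lambda>i. del (ext c i))"
      by (rule TP_cong[OF assms]) (simp add: ext_def)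
    thus "(\<Prod>i\<in>{..<n}. f i (c i)) * TP r (\<lambda>i. if i \<in> {..<n} then del (c i) else f i) =
          PT f (ext c) * TP r (\<lambda>i. del (ext c i))"
      by (simp add: PT_ext[OF c])
  qed
  also have "\<dots> = Tlin r (PT f)"
    unfolding Tlin_def by (rule sum_V_PiE[symmetric])
  finally show ?thesis by simp
qed

lemma Tlin_sum: "Tlin r (\<lambda>v. \<Sum>j\<in>S. a j * g j v) = (\<Sum>j\<in>S. a j * Tlin r (g j))"
  unfolding Tlin_def by (simp add: sum_distrib_left sum_distrib_right sum.swap[of _ S] mult_ac)

lemma Tlin_cong: "(\<And>v. v \<in> V \<Longrightarrow> x v = y v) \<Longrightarrow> Tlin r x = Tlin r y"
  unfolding Tlin_def by simp

lemma principle: assumes "part r"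
  shows "Tlin r (mulC one N n (PT h) Y) =
    (\<Sum>w\<in>V. Y w * (\<Prod>B\<in>blocks r. star (BS.F h B) (BS.F (\<lambda>i. del (w i)) B) one))"
proof -
  have "Tlin r (mulC one N n (PT h) Y) = Tlin r (\<lambda>c. \<Sum>w\<in>V. Y w * PT (\<lambda>i. star (h i) (del (w i))) c)"
    by (rule arg_cong[where f="Tlin r"], rule ext, rule mulC_PT_left)
  also have "\<dots> = (\<Sum>w\<in>V. Y w * Tlin r (PT (\<lambda>i. star (h i) (del (w i)))))"
    by (rule Tlin_sum)
  also have "\<dots> = (\<Sum>w\<in>V. Y w * (\<Prod>B\<in>blocks r. star (BS.F h B) (BS.F (\<lambda>i. del (w i)) B) one))"
    by (simp add: Tlin_PT[OF assms] TP_def BS.distrib)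
  finally show ?thesis .
qed

end

context FRn begin

lemma F_single: assumes "finite B" "a \<in> B" "\<And>k. k \<in> B \<Longrightarrow> k \<noteq> a \<Longrightarrow> g k = del one"
  shows "BS.F g B = g a"
proof -
  have "BS.F g B = star (g a) (BS.F g (B - {a}))" by (rule BS.remove[OF assms(1,2)])
  also have "BS.F g (B - {a}) = del one" by (rule BS.neutral) (use assms(3) in auto)
  finally show ?thesis by (simp add: star_del_one_right)
qed

lemma F_two: assumes "finite B" "a \<in> B" "b \<in> B" "a \<noteq> b" "\<And>k. k \<in> B \<Longrightarrow> k \<noteq> a \<Longrightarrow> k \<noteq> b \<Longrightarrow> g k = del one"
  shows "BS.F g B = star (g a) (g b)"
proof -
  have "BS.F g B = star (g a) (BS.F g (B - {a}))" by (rule BS.remove[OF assms(1,2)])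
  also have "BS.F g (B - {a}) = g b" by (rule F_single) (use assms in auto)
  finally show ?thesis .
qed

lemma F_none: assumes "\<And>k. k \<in> B \<Longrightarrow> g k = del one" shows "BS.F g B = del one"
  by (rule BS.neutral) (use assms in auto)

definition join :: "(nat \<times> nat) set \<Rightarrow> nat \<Rightarrow> nat \<Rightarrow> (nat \<times> nat) set" where
  "join r i j = (r \<union> {(i, j), (j, i)})\<^sup>*"

lemma join_char: assumes "part r"
  shows "(x, y) \<in> join r i j \<longleftrightarrow> (x, y) \<in> r \<or> ((x, i) \<in> r \<and> (j, y) \<in> r) \<or> ((x, j) \<in> r \<and> (i, y) \<in> r)"
proof
  assume "(x, y) \<in> join r i j"
  thus "(x, y) \<in> r \<or> ((x, i) \<in> r \<and> (j, y) \<in> r) \<or> ((x, j) \<in> r \<and> (i, y) \<in> r)"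
    unfolding join_def
  proof (induction rule: rtrancl_induct)
    case base thus ?case using part_refl[OF assms] by blast
  next
    case (step y z)
    from step.hyps(2) step.IH show ?case using part_trans[OF assms] part_refl[OF assms] by blast
  qed
next
  assume a: "(x, y) \<in> r \<or> ((x, i) \<in> r \<and> (j, y) \<in> r) \<or> ((x, j) \<in> r \<and> (i, y) \<in> r)"
  have sub: "r \<subseteq> join r i j" unfolding join_def by auto
  have ij: "(i, j) \<in> join r i j" "(j, i) \<in> join r i j" unfolding join_def by auto
  show "(x, y) \<in> join r i j"
    using a sub ij unfolding join_def by (meson rtrancl_trans subsetD)
qed

lemma join_part: assumes "part r" "i < n" "j < n" shows "part (join r i j)"
  unfolding part_def
proof (intro conjI allI impI)
  show "equiv UNIV (join r i j)"
  proof (rule equivI)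
    show "join r i j \<subseteq> UNIV \<times> UNIV" by simp
    show "refl (join r i j)" unfolding join_def refl_on_def by blast
    show "sym (join r i j)" unfolding sym_def
    proof (intro allI impI)
      fix x y assume "(x, y) \<in> join r i j"
      hence "(x, y) \<in> r \<or> ((x, i) \<in> r \<and> (j, y) \<in> r) \<or> ((x, j) \<in> r \<and> (i, y) \<in> r)"
        using join_char[OF assms(1)] by blast
      hence "(y, x) \<in> r \<or> ((y, i) \<in> r \<and> (j, x) \<in> r) \<or> ((y, j) \<in> r \<and> (i, x) \<in> r)"
        using part_sym[OF assms(1)] by metis
      thus "(y, x) \<in> join r i j" using join_char[OF assms(1)] by blast
    qed
    show "trans (join r i j)" unfolding join_def by (rule trans_rtrancl)
  qed
  fix x y assume "(x, y) \<in> join r i j"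
  hence "(x, y) \<in> r \<or> ((x, i) \<in> r \<and> (j, y) \<in> r) \<or> ((x, j) \<in> r \<and> (i, y) \<in> r)"
    using join_char[OF assms(1)] by blast
  thus "(x < n) = (y < n)"
  proof (elim disjE conjE)
    assume "(x, y) \<in> r" thus ?thesis using part_lt[OF assms(1)] part_sym[OF assms(1)] by metis
  next
    assume "(x, i) \<in> r" "(j, y) \<in> r"
    hence "x < n" "y < n" using part_lt[OF assms(1)] part_sym[OF assms(1)] assms(2,3) by metis+
    thus ?thesis by simp
  next
    assume "(x, j) \<in> r" "(i, y) \<in> r"
    hence "x < n" "y < n" using part_lt[OF assms(1)] part_sym[OF assms(1)] assms(2,3) by metis+
    thus ?thesis by simp
  qed
qed

lemma join_same: assumes "part r" "(i, j) \<in> r" shows "join r i j = r"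
proof (intro set_eqI iffI)
  fix p assume "p \<in> join r i j"
  then obtain x y where p: "p = (x, y)" "(x, y) \<in> join r i j" by (cases p) auto
  hence "(x, y) \<in> r \<or> ((x, i) \<in> r \<and> (j, y) \<in> r) \<or> ((x, j) \<in> r \<and> (i, y) \<in> r)"
    using join_char[OF assms(1)] by blast
  moreover have ji: "(j, i) \<in> r" using part_sym[OF assms] .
  ultimately have "(x, y) \<in> r"
  proof (elim disjE conjE)
    assume a: "(x, i) \<in> r" "(j, y) \<in> r"
    show ?thesis by (rule part_trans[OF assms(1) part_trans[OF assms(1) a(1) assms(2)] a(2)])
  next
    assume a: "(x, j) \<in> r" "(i, y) \<in> r"
    show ?thesis by (rule part_trans[OF assms(1) part_trans[OF assms(1) a(1) ji] a(2)])
  qed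
  thus "p \<in> r" using p(1) by simp
next
  fix p assume "p \<in> r" thus "p \<in> join r i j" unfolding join_def by auto
qed

lemma cls_join: assumes "part r" "(i, j) \<notin> r"
  shows "join r i j `` {x} = (if (x, i) \<in> r \<or> (x, j) \<in> r then r `` {i} \<union> r `` {j} else r `` {x})"
proof (cases "(x, i) \<in> r \<or> (x, j) \<in> r")
  case True
  show ?thesis
  proof (intro set_eqI iffI)
    fix y assume "y \<in> join r i j `` {x}"
    hence "(x, y) \<in> r \<or> ((x, i) \<in> r \<and> (j, y) \<in> r) \<or> ((x, j) \<in> r \<and> (i, y) \<in> r)"
      using join_char[OF assms(1)] by blast
    hence "(i, y) \<in> r \<or> (j, y) \<in> r"
    proof (elim disjE conjE)
      assume xy: "(x, y) \<in> r"
      from True show ?thesis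
      proof
        assume "(x, i) \<in> r" thus ?thesis using part_trans[OF assms(1) part_sym[OF assms(1)] xy] by blast
      next
        assume "(x, j) \<in> r" thus ?thesis using part_trans[OF assms(1) part_sym[OF assms(1)] xy] by blast
      qed
    qed simp_all
    thus "y \<in> (if (x, i) \<in> r \<or> (x, j) \<in> r then r `` {i} \<union> r `` {j} else r `` {x})"
      using True by simp
  next
    fix y assume "y \<in> (if (x, i) \<in> r \<or> (x, j) \<in> r then r `` {i} \<union> r `` {j} else r `` {x})"
    hence "(i, y) \<in> r \<or> (j, y) \<in> r" using True by auto
    hence "(x, y) \<in> r \<or> ((x, i) \<in> r \<and> (j, y) \<in> r) \<or> ((x, j) \<in> r \<and> (i, y) \<in> r)"
    proof
      assume iy: "(i, y) \<in> r"
      from True show ?thesis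
      proof
        assume "(x, i) \<in> r" thus ?thesis using part_trans[OF assms(1) _ iy] by blast
      next
        assume "(x, j) \<in> r" thus ?thesis using iy by blast
      qed
    next
      assume jy: "(j, y) \<in> r"
      from True show ?thesis
      proof
        assume "(x, i) \<in> r" thus ?thesis using jy by blast
      next
        assume "(x, j) \<in> r" thus ?thesis using part_trans[OF assms(1) _ jy] by blast
      qed
    qed
    thus "y \<in> join r i j `` {x}" using join_char[OF assms(1)] by blast
  qed
next
  case False
  show ?thesis
  proof (intro set_eqI iffI)
    fix y assume "y \<in> join r i j `` {x}"
    hence "(x, y) \<in> r \<or> ((x, i) \<in> r \<and> (j, y) \<in> r) \<or> ((x, j) \<in> r \<and> (i, y) \<in> r)"
      using join_char[OF assms(1)] by blast
    thus "y \<in> (if (x, i) \<in> r \<or> (x, j) \<in> r then r `` {i} \<union> r `` {j} else r `` {x})"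
      using False by auto
  next
    fix y assume "y \<in> (if (x, i) \<in> r \<or> (x, j) \<in> r then r `` {i} \<union> r `` {j} else r `` {x})"
    hence "(x, y) \<in> r" using False by simp
    thus "y \<in> join r i j `` {x}" using join_char[OF assms(1)] by blast
  qed
qed

lemma blocks_join: assumes "part r" "i < n" "j < n" "(i, j) \<notin> r"
  shows "blocks (join r i j) = insert (r `` {i} \<union> r `` {j}) (blocks r - {r `` {i}, r `` {j}})"
proof
  show "blocks (join r i j) \<subseteq> insert (r `` {i} \<union> r `` {j}) (blocks r - {r `` {i}, r `` {j}})"
  proof
    fix B assume "B \<in> blocks (join r i j)"
    then obtain x where x: "x < n" "B = join r i j `` {x}" unfolding blocks_def by auto
    show "B \<in> insert (r `` {i} \<union> r `` {j}) (blocks r - {r `` {i}, r `` {j}})"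
    proof (cases "(x, i) \<in> r \<or> (x, j) \<in> r")
      case True
      hence "B = r `` {i} \<union> r `` {j}" using x(2) cls_join[OF assms(1,4), of x] by simp
      thus ?thesis by simp
    next
      case False
      hence B: "B = r `` {x}" using x(2) cls_join[OF assms(1,4), of x] by simp
      have "x \<in> r `` {x}" using part_refl[OF assms(1)] by simp
      hence "r `` {x} \<noteq> r `` {i}" "r `` {x} \<noteq> r `` {j}"
        using False part_sym[OF assms(1)] by blast+
      moreover have "r `` {x} \<in> blocks r" using x(1) unfolding blocks_def by simp
      ultimately show ?thesis using B by simp
    qed
  qed
next
  show "insert (r `` {i} \<union> r `` {j}) (blocks r - {r `` {i}, r `` {j}}) \<subseteq> blocks (join r i j)"
  proof
    fix B assume B: "B \<in> insert (r `` {i} \<union> r `` {j}) (blocks r - {r `` {i}, r `` {j}})"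
    show "B \<in> blocks (join r i j)"
    proof (cases "B = r `` {i} \<union> r `` {j}")
      case True
      have "(i, i) \<in> r" by (rule part_refl[OF assms(1)])
      hence "join r i j `` {i} = r `` {i} \<union> r `` {j}" using cls_join[OF assms(1,4), of i] by simp
      hence "B = join r i j `` {i}" using True by simp
      thus ?thesis using assms(2) unfolding blocks_def by simp
    next
      case False
      with B have B2: "B \<in> blocks r" "B \<noteq> r `` {i}" "B \<noteq> r `` {j}" by auto
      then obtain x where x: "x < n" "B = r `` {x}" unfolding blocks_def by auto
      have "(x, i) \<notin> r" using part_cls_eq[OF assms(1), of x i] x(2) B2(2) by blast
      moreover have "(x, j) \<notin> r" using part_cls_eq[OF assms(1), of x j] x(2) B2(3) by blast
      ultimately have "B = join r i j `` {x}" using x(2) cls_join[OF assms(1,4), of x] by simp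
      thus ?thesis using x(1) unfolding blocks_def by simp
    qed
  qed
qed

definition ov :: "nat \<Rightarrow> nat \<Rightarrow> 'l \<Rightarrow> nat \<Rightarrow> 'l" where
  "ov i j c = (unitvec one)(i := c, j := dual c)"

definition gO :: "nat \<Rightarrow> nat \<Rightarrow> 'l \<Rightarrow> nat \<Rightarrow> 'l \<Rightarrow> int" where
  "gO i j c = (\<lambda>k. del (ov i j c k))"

lemma ov_V: "i < n \<Longrightarrow> j < n \<Longrightarrow> ov i j c \<in> V"
  by (simp add: ov_def in_V unitvec_def)

lemma Omega_PT: assumes "i < n" "j < n"
  shows "Omega one dual i j = (\<lambda>v. \<Sum>c\<in>UNIV. 1 * PT (gO i j c) v)"
  unfolding Omega_def using basis_PT[OF ov_V[OF assms]] by (simp add: ov_def gO_def)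

lemma blocks_disj: assumes "part r" "B \<in> blocks r" "B' \<in> blocks r" "B \<noteq> B'" shows "B \<inter> B' = {}"
  using block_uniq[OF assms(1)] assms(2-4) by blast

lemma Tlin_Omega: assumes "part r" "i < n" "j < n"
  shows "Tlin r (mulC one N n Y (Omega one dual i j)) =
    (\<Sum>w\<in>V. Y w * (\<Sum>c\<in>UNIV. \<Prod>B\<in>blocks r. star (BS.F (gO i j c) B) (BS.F (\<lambda>k. del (w k)) B) one))"
proof -
  have "mulC one N n Y (Omega one dual i j) = (\<lambda>x. \<Sum>c\<in>UNIV. 1 * mulC one N n (PT (gO i j c)) Y x)"
    by (rule ext) (simp add: mulC_comm[of Y] Omega_PT[OF assms(2,3)] mulC_sum_left)
  hence "Tlin r (mulC one N n Y (Omega one dual i j)) = (\<Sum>c\<in>UNIV. 1 * Tlin r (mulC one N n (PT (gO i j c)) Y))"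
    by (simp only: Tlin_sum)
  also have "\<dots> = (\<Sum>c\<in>UNIV. \<Sum>w\<in>V. Y w * (\<Prod>B\<in>blocks r. star (BS.F (gO i j c) B) (BS.F (\<lambda>k. del (w k)) B) one))"
    by (simp add: principle[OF assms(1)])
  also have "\<dots> = (\<Sum>w\<in>V. \<Sum>c\<in>UNIV. Y w * (\<Prod>B\<in>blocks r. star (BS.F (gO i j c) B) (BS.F (\<lambda>k. del (w k)) B) one))"
    by (rule sum.swap)
  also have "\<dots> = (\<Sum>w\<in>V. Y w * (\<Sum>c\<in>UNIV. \<Prod>B\<in>blocks r. star (BS.F (gO i j c) B) (BS.F (\<lambda>k. del (w k)) B) one))"
    by (simp add: sum_distrib_left)
  finally show ?thesis .
qed

lemma gO_i: "gO i j c i = (if i = j then del (dual c) else del c)" by (simp add: gO_def ov_def)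
lemma gO_j: "gO i j c j = del (dual c)" by (simp add: gO_def ov_def)
lemma gO_other: "k \<noteq> i \<Longrightarrow> k \<noteq> j \<Longrightarrow> gO i j c k = del one" by (simp add: gO_def ov_def unitvec_def)

lemma KM: assumes "part r" "i < n" "j < n" "(i, j) \<notin> r"
  shows "(\<Sum>c\<in>UNIV. \<Prod>B\<in>blocks r. star (BS.F (gO i j c) B) (BS.F h B) one) = (\<Prod>B\<in>blocks (join r i j). BS.F h B one)"
proof -
  let ?P = "blocks r" let ?Bi = "r `` {i}" let ?Bj = "r `` {j}"
  have Bi: "?Bi \<in> ?P" "i \<in> ?Bi" and Bj: "?Bj \<in> ?P" "j \<in> ?Bj" using block_of[OF assms(1)] assms(2,3) by auto
  have ij: "i \<noteq> j" using assms(4) part_refl[OF assms(1)] by auto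
  have jBi: "j \<notin> ?Bi" using assms(4) by simp
  have iBj: "i \<notin> ?Bj" using assms(4) part_sym[OF assms(1)] by blast
  have BiBj: "?Bi \<noteq> ?Bj" using jBi Bj(2) by blast
  have disj: "?Bi \<inter> ?Bj = {}" by (rule blocks_disj[OF assms(1) Bi(1) Bj(1) BiBj])
  have fin: "finite ?Bi" "finite ?Bj" using block_finite[OF assms(1)] Bi(1) Bj(1) by auto
  let ?R = "\<Prod>B\<in>?P - {?Bi, ?Bj}. BS.F h B one"
  have other: "BS.F (gO i j c) B = del one" if "B \<in> ?P - {?Bi, ?Bj}" for B c
  proof (rule F_none)
    fix k assume "k \<in> B"
    have "i \<notin> B" using that block_uniq[OF assms(1)] by blast
    moreover have "j \<notin> B" using that block_uniq[OF assms(1)] by blast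
    ultimately show "gO i j c k = del one" using \<open>k \<in> B\<close> gO_other by metis
  qed
  have FBi: "BS.F (gO i j c) ?Bi = del c" for c
  proof -
    have "BS.F (gO i j c) ?Bi = gO i j c i"
      by (rule F_single[OF fin(1) Bi(2)]) (metis gO_other jBi)
    thus ?thesis using gO_i ij by simp
  qed
  have FBj: "BS.F (gO i j c) ?Bj = del (dual c)" for c
  proof -
    have "BS.F (gO i j c) ?Bj = gO i j c j"
      by (rule F_single[OF fin(2) Bj(2)]) (metis gO_other iBj)
    thus ?thesis using gO_j by simp
  qed
  have split: "(\<Prod>B\<in>?P. f B) = f ?Bi * (f ?Bj * (\<Prod>B\<in>?P - {?Bi, ?Bj}. f B))" for f :: "nat set \<Rightarrow> int"
  proof -
    have "(\<Prod>B\<in>?P. f B) = f ?Bi * (\<Prod>B\<in>?P - {?Bi}. f B)" by (rule prod.remove[OF blocks_finite Bi(1)])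
    also have "(\<Prod>B\<in>?P - {?Bi}. f B) = f ?Bj * (\<Prod>B\<in>?P - {?Bi} - {?Bj}. f B)"
      by (rule prod.remove) (use blocks_finite Bj(1) BiBj in auto)
    finally show ?thesis by (simp add: Diff_insert2[symmetric] insert_commute)
  qed
  have "(\<Sum>c\<in>UNIV. \<Prod>B\<in>?P. star (BS.F (gO i j c) B) (BS.F h B) one)
      = (\<Sum>c\<in>UNIV. star (del c) (BS.F h ?Bi) one * (star (del (dual c)) (BS.F h ?Bj) one * ?R))"
  proof (rule sum.cong[OF refl])
    fix c
    have "(\<Prod>B\<in>?P - {?Bi, ?Bj}. star (BS.F (gO i j c) B) (BS.F h B) one) = ?R"
      by (rule prod.cong[OF refl]) (simp add: other star_unit)
    thus "(\<Prod>B\<in>?P. star (BS.F (gO i j c) B) (BS.F h B) one) =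
      star (del c) (BS.F h ?Bi) one * (star (del (dual c)) (BS.F h ?Bj) one * ?R)"
      by (simp add: split FBi FBj)
  qed
  also have "\<dots> = (\<Sum>c\<in>UNIV. star (BS.F h ?Bi) (del c) one * star (BS.F h ?Bj) (del (dual c)) one) * ?R"
    by (simp add: sum_distrib_right sum_distrib_left mult_ac star_comm[of "del _"])
  also have "\<dots> = star (BS.F h ?Bi) (BS.F h ?Bj) one * ?R" by (simp only: eps_merge)
  also have "star (BS.F h ?Bi) (BS.F h ?Bj) = BS.F h (?Bi \<union> ?Bj)"
    by (rule BS.union_disjoint[OF fin disj, symmetric])
  also have "BS.F h (?Bi \<union> ?Bj) one * ?R = (\<Prod>B\<in>insert (?Bi \<union> ?Bj) (?P - {?Bi, ?Bj}). BS.F h B one)"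
  proof (rule prod.insert[symmetric])
    show "finite (?P - {?Bi, ?Bj})" using blocks_finite by simp
    show "?Bi \<union> ?Bj \<notin> ?P - {?Bi, ?Bj}"
    proof
      assume "?Bi \<union> ?Bj \<in> ?P - {?Bi, ?Bj}"
      hence "?Bi \<union> ?Bj \<in> ?P" "?Bi \<union> ?Bj \<noteq> ?Bi" by auto
      moreover have "i \<in> ?Bi \<union> ?Bj" using Bi by auto
      ultimately show False using block_uniq[OF assms(1)] by blast
    qed
  qed
  also have "\<dots> = (\<Prod>B\<in>blocks (join r i j). BS.F h B one)" by (simp add: blocks_join[OF assms])
  finally show ?thesis .
qed

definition eO :: "nat \<Rightarrow> nat \<Rightarrow> 'l \<Rightarrow> int" where
  "eO i = (\<lambda>k. if k = i then omega else del one)"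

lemma KS: assumes "part r" "i < n" "j < n" "i \<noteq> j" "(i, j) \<in> r"
  shows "(\<Sum>c\<in>UNIV. \<Prod>B\<in>blocks r. star (BS.F (gO i j c) B) (BS.F h B) one) = (\<Prod>B\<in>blocks r. star (BS.F (eO i) B) (BS.F h B) one)"
proof -
  let ?P = "blocks r" let ?Bi = "r `` {i}"
  have Bi: "?Bi \<in> ?P" "i \<in> ?Bi" "j \<in> ?Bi" using block_of[OF assms(1)] assms(2,3,5) by auto
  have fin: "finite ?Bi" using block_finite[OF assms(1)] Bi(1) by auto
  let ?R = "\<Prod>B\<in>?P - {?Bi}. BS.F h B one"
  have other: "BS.F (gO i j c) B = del one" "BS.F (eO i) B = del one" if "B \<in> ?P - {?Bi}" for B c
  proof -
    have "i \<notin> B" using that block_uniq[OF assms(1)] by blast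
    moreover have "j \<notin> B" using that block_uniq[OF assms(1)] Bi(3) part_cls_eq[OF assms(1) assms(5)] by blast
    ultimately show "BS.F (gO i j c) B = del one" "BS.F (eO i) B = del one"
    proof -
      assume a: "i \<notin> B" "j \<notin> B"
      show "BS.F (gO i j c) B = del one" by (rule F_none) (metis a gO_other)
      show "BS.F (eO i) B = del one" by (rule F_none) (metis a eO_def)
    qed
  qed
  have FB: "BS.F (gO i j c) ?Bi = star (del c) (del (dual c))" for c
    using F_two[OF fin Bi(2,3) assms(4), of "gO i j c"] gO_other gO_i gO_j assms(4) by auto
  have FBe: "BS.F (eO i) ?Bi = omega"
    using F_single[OF fin Bi(2), of "eO i"] by (simp add: eO_def)
  have split: "(\<Prod>B\<in>?P. f B) = f ?Bi * (\<Prod>B\<in>?P - {?Bi}. f B)" for f :: "nat set \<Rightarrow> int"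
    by (rule prod.remove[OF blocks_finite Bi(1)])
  have R1: "(\<Prod>B\<in>?P - {?Bi}. star (BS.F (gO i j c) B) (BS.F h B) one) = ?R" for c
    by (rule prod.cong[OF refl]) (simp add: other star_unit)
  have R2: "(\<Prod>B\<in>?P - {?Bi}. star (BS.F (eO i) B) (BS.F h B) one) = ?R"
    by (rule prod.cong[OF refl]) (simp add: other star_unit)
  have "(\<Sum>c\<in>UNIV. \<Prod>B\<in>?P. star (BS.F (gO i j c) B) (BS.F h B) one)
      = (\<Sum>c\<in>UNIV. star (star (del c) (del (dual c))) (BS.F h ?Bi) one) * ?R"
    by (simp add: split R1 FB sum_distrib_right)
  also have "(\<Sum>c\<in>UNIV. star (star (del c) (del (dual c))) (BS.F h ?Bi) one) = star omega (BS.F h ?Bi) one"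
    unfolding omega_def by (simp only: star_sum_left)
  also have "star omega (BS.F h ?Bi) one * ?R = (\<Prod>B\<in>?P. star (BS.F (eO i) B) (BS.F h B) one)"
    by (simp add: split R2 FBe)
  finally show ?thesis .
qed

lemma Omega_merge: assumes "part r" "i < n" "j < n" "(i, j) \<notin> r"
  shows "Tlin r (mulC one N n Y (Omega one dual i j)) = Tlin (join r i j) Y"
  by (simp only: Tlin_Omega[OF assms(1-3)] KM[OF assms]) (simp add: Tlin_def TP_def)

lemma Tlin_PT_cong: assumes "part r" "\<And>B. B \<in> blocks r \<Longrightarrow> BS.F h B = BS.F h' B"
  shows "Tlin r (mulC one N n Y (PT h)) = Tlin r (mulC one N n Y (PT h'))"
  by (simp add: mulC_comm[of Y] principle[OF assms(1)] assms(2))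

lemma Omega_same: assumes "part r" "i < n" "j < n" "i \<noteq> j" "(i, j) \<in> r"
  shows "Tlin r (mulC one N n Y (Omega one dual i j)) = Tlin r (mulC one N n Y (PT (eO i)))"
  unfolding Tlin_Omega[OF assms(1-3)] KS[OF assms] by (simp add: mulC_comm[of Y] principle[OF assms(1)])

end

context FRn begin

fun Qr :: "(nat \<times> nat) set \<Rightarrow> (nat \<times> nat) list \<Rightarrow> (nat \<times> nat) set" where
  "Qr r [] = r"
| "Qr r ((i, j) # E) = join (Qr r E) i j"

fun hcx :: "(nat \<times> nat) set \<Rightarrow> (nat \<times> nat) list \<Rightarrow> nat \<Rightarrow> nat" where
  "hcx r [] x = 0"
| "hcx r ((i, j) # E) x = (if (x, i) \<in> Qr r E \<or> (x, j) \<in> Qr r E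
      then (if (i, j) \<in> Qr r E then hcx r E i + 1 else hcx r E i + hcx r E j)
      else hcx r E x)"

fun pw :: "nat \<Rightarrow> 'l \<Rightarrow> int" where
  "pw 0 = del one"
| "pw (Suc m) = star omega (pw m)"

lemma pw_add: "star (pw a) (pw b) = pw (a + b)"
  by (induction a) (simp_all add: star_unit star_assoc)

lemma pw_Suc': "star (pw a) omega = pw (Suc a)"
proof -
  have "omega = pw 1" by (simp add: star_del_one_right)
  thus ?thesis using pw_add[of a 1] by simp
qed

definition hh :: "(nat \<times> nat) set \<Rightarrow> (nat \<times> nat) list \<Rightarrow> nat \<Rightarrow> 'l \<Rightarrow> int" where
  "hh r E = (\<lambda>k. if k = Min (Qr r E `` {k}) then pw (hcx r E k) else del one)"

fun OP :: "(nat \<times> nat) list \<Rightarrow> (nat \<Rightarrow> 'l) \<Rightarrow> int" where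
  "OP [] = basis (unitvec one)"
| "OP ((i, j) # E) = mulC one N n (Omega one dual i j) (OP E)"

definition good :: "(nat \<times> nat) list \<Rightarrow> bool" where
  "good E \<longleftrightarrow> (\<forall>(i, j)\<in>set E. i < n \<and> j < n \<and> i \<noteq> j)"

lemma good_Cons: "good ((i, j) # E) \<longleftrightarrow> i < n \<and> j < n \<and> i \<noteq> j \<and> good E"
  by (auto simp: good_def)

lemma Qr_part: "part r \<Longrightarrow> good E \<Longrightarrow> part (Qr r E)"
proof (induction E)
  case Nil thus ?case by simp
next
  case (Cons e E) thus ?case by (cases e) (auto simp: good_Cons intro!: join_part)
qed

lemma hcx_const: assumes "part r" "good E" "(x, y) \<in> Qr r E" shows "hcx r E x = hcx r E y"
  using assms(2,3)
proof (induction E arbitrary: x y)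
  case Nil thus ?case by simp
next
  case (Cons e E)
  obtain i j where e: "e = (i, j)" by (cases e)
  have g: "good E" "i < n" "j < n" using Cons.prems(1) e by (auto simp: good_Cons)
  have P: "part (Qr r E)" by (rule Qr_part[OF assms(1) g(1)])
  let ?Q = "Qr r E"
  have xy: "(x, y) \<in> join ?Q i j" using Cons.prems(2) e by simp
  hence c: "(x, y) \<in> ?Q \<or> ((x, i) \<in> ?Q \<and> (j, y) \<in> ?Q) \<or> ((x, j) \<in> ?Q \<and> (i, y) \<in> ?Q)"
    using join_char[OF P] by blast
  show ?case
  proof (cases "(x, i) \<in> ?Q \<or> (x, j) \<in> ?Q")
    case True
    have "(y, i) \<in> ?Q \<or> (y, j) \<in> ?Q"
      using c
    proof (elim disjE conjE)
      assume xy: "(x, y) \<in> ?Q"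
      have yx: "(y, x) \<in> ?Q" by (rule part_sym[OF P xy])
      from True show ?thesis
      proof
        assume "(x, i) \<in> ?Q" thus ?thesis using part_trans[OF P yx] by blast
      next
        assume "(x, j) \<in> ?Q" thus ?thesis using part_trans[OF P yx] by blast
      qed
    next
      assume "(j, y) \<in> ?Q" thus ?thesis using part_sym[OF P] by blast
    next
      assume "(i, y) \<in> ?Q" thus ?thesis using part_sym[OF P] by blast
    qed
    thus ?thesis using True e by simp
  next
    case False
    hence "(x, y) \<in> ?Q" using c by blast
    moreover have "\<not> ((y, i) \<in> ?Q \<or> (y, j) \<in> ?Q)"
      using False part_trans[OF P calculation] by blast
    ultimately show ?thesis using False e Cons.IH[OF g(1)] by simp
  qed
qed

lemma F_hh: assumes "part r" "good E" "B \<in> blocks (Qr r E)" "x \<in> B"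
  shows "BS.F (hh r E) B = pw (hcx r E x)"
proof -
  let ?Q = "Qr r E"
  have P: "part ?Q" by (rule Qr_part[OF assms(1,2)])
  have fin: "finite B" by (rule block_finite[OF P assms(3)])
  have ne: "B \<noteq> {}" by (rule block_ne[OF P assms(3)])
  have m: "Min B \<in> B" using Min_in[OF fin ne] .
  have cl: "?Q `` {k} = B" if "k \<in> B" for k using block_uniq[OF P assms(3) that] by simp
  have "BS.F (hh r E) B = hh r E (Min B)"
    by (rule F_single[OF fin m]) (simp add: hh_def cl)
  also have "\<dots> = pw (hcx r E (Min B))" by (simp add: hh_def cl[OF m])
  also have "hcx r E (Min B) = hcx r E x"
  proof (rule hcx_const[OF assms(1,2)])
    have "B = ?Q `` {x}" using cl[OF assms(4)] by simp
    thus "(Min B, x) \<in> ?Q" using m part_sym[OF P] by auto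
  qed
  finally show ?thesis .
qed

lemma OP_supp: "supp (OP E)"
  by (cases E rule: OP.cases) (auto simp: supp_mulC supp_basis unit_in_V)

lemma hh_Nil: "hh r [] = (\<lambda>k. del one)"
  by (rule ext) (simp add: hh_def)

lemma Elim: assumes "part r" "good E"
  shows "Tlin r (mulC one N n Y (OP E)) = Tlin (Qr r E) (mulC one N n Y (PT (hh r E)))"
  using assms(2)
proof (induction E arbitrary: Y)
  case Nil
  have "PT (hh r []) = basis (unitvec one)"
    using basis_PT[OF unit_in_V] by (simp add: hh_Nil unitvec_def)
  thus ?case by simp
next
  case (Cons e E)
  obtain i j where e: "e = (i, j)" by (cases e)
  have g: "good E" "i < n" "j < n" "i \<noteq> j" using Cons.prems e by (auto simp: good_Cons)
  let ?Q = "Qr r E"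
  have P: "part ?Q" by (rule Qr_part[OF assms(1) g(1)])
  let ?H = "PT (hh r E)"
  have "Tlin r (mulC one N n Y (OP (e # E))) = Tlin r (mulC one N n (mulC one N n Y (Omega one dual i j)) (OP E))"
    using e by (simp add: mulC_assoc)
  also have "\<dots> = Tlin ?Q (mulC one N n (mulC one N n Y (Omega one dual i j)) ?H)"
    by (rule Cons.IH[OF g(1)])
  also have "mulC one N n (mulC one N n Y (Omega one dual i j)) ?H = mulC one N n (mulC one N n Y ?H) (Omega one dual i j)"
    by (simp add: mulC_assoc mulC_comm[of "Omega one dual i j"])
  finally have L: "Tlin r (mulC one N n Y (OP (e # E))) = Tlin ?Q (mulC one N n (mulC one N n Y ?H) (Omega one dual i j))" .
  show ?case
  proof (cases "(i, j) \<in> ?Q")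
    case False
    have "Tlin ?Q (mulC one N n (mulC one N n Y ?H) (Omega one dual i j)) = Tlin (join ?Q i j) (mulC one N n Y ?H)"
      by (rule Omega_merge[OF P g(2,3) False])
    also have "\<dots> = Tlin (Qr r (e # E)) (mulC one N n Y (PT (hh r (e # E))))"
      unfolding e Qr.simps
    proof (rule Tlin_PT_cong[OF join_part[OF P g(2,3)]])
      fix B assume B: "B \<in> blocks (join ?Q i j)"
      have PE: "part (Qr r (e # E))" "good (e # E)" using Qr_part[OF assms(1) Cons.prems] Cons.prems by auto
      have Bb: "B \<in> blocks (Qr r (e # E))" using B e by simp
      have m: "Min B \<in> B" using Min_in[OF block_finite[OF PE(1) Bb] block_ne[OF PE(1) Bb]] .
      have new: "BS.F (hh r (e # E)) B = pw (hcx r (e # E) (Min B))" by (rule F_hh[OF assms(1) PE(2) Bb m])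
      from B[unfolded blocks_join[OF P g(2,3) False]]
      show "BS.F (hh r E) B = BS.F (hh r ((i, j) # E)) B"
      proof (elim insertE)
        assume Bij: "B = ?Q `` {i} \<union> ?Q `` {j}"
        have fin: "finite (?Q `` {i})" "finite (?Q `` {j})"
          using block_finite[OF P] block_of[OF P] g(2,3) by auto
        have disj: "?Q `` {i} \<inter> ?Q `` {j} = {}"
          using blocks_disj[OF P] block_of[OF P] g(2,3) False by (metis Image_singleton_iff)
        have "BS.F (hh r E) B = star (BS.F (hh r E) (?Q `` {i})) (BS.F (hh r E) (?Q `` {j}))"
          using Bij BS.union_disjoint[OF fin disj] by simp
        also have "\<dots> = star (pw (hcx r E i)) (pw (hcx r E j))"
          using F_hh[OF assms(1) g(1), of "?Q `` {i}" i] F_hh[OF assms(1) g(1), of "?Q `` {j}" j]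
            block_of[OF P] g(2,3) by auto
        also have "\<dots> = pw (hcx r (e # E) (Min B))"
        proof -
          have "(Min B, i) \<in> ?Q \<or> (Min B, j) \<in> ?Q" using m Bij part_sym[OF P] by auto
          thus ?thesis using e False by (simp add: pw_add)
        qed
        finally show ?thesis using new e by simp
      next
        assume B2: "B \<in> blocks ?Q - {?Q `` {i}, ?Q `` {j}}"
        have "BS.F (hh r E) B = pw (hcx r E (Min B))" using F_hh[OF assms(1) g(1), of B "Min B"] B2 m by auto
        moreover have "\<not> ((Min B, i) \<in> ?Q \<or> (Min B, j) \<in> ?Q)"
        proof
          have Bq: "B \<in> blocks ?Q" "B \<noteq> ?Q `` {i}" "B \<noteq> ?Q `` {j}" using B2 by auto
          have BM: "B = ?Q `` {Min B}" by (rule block_uniq[OF P Bq(1) m])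
          assume "(Min B, i) \<in> ?Q \<or> (Min B, j) \<in> ?Q"
          thus False
          proof
            assume "(Min B, i) \<in> ?Q" thus False using part_cls_eq[OF P] BM Bq(2) by metis
          next
            assume "(Min B, j) \<in> ?Q" thus False using part_cls_eq[OF P] BM Bq(3) by metis
          qed
        qed
        ultimately show ?thesis using new e by simp
      qed
    qed
    finally show ?thesis using L by simp
  next
    case True
    have QQ: "Qr r (e # E) = ?Q" using e join_same[OF P True] by simp
    have "Tlin ?Q (mulC one N n (mulC one N n Y ?H) (Omega one dual i j)) = Tlin ?Q (mulC one N n (mulC one N n Y ?H) (PT (eO i)))"
      by (rule Omega_same[OF P g(2,3,4) True])
    also have "\<dots> = Tlin ?Q (mulC one N n Y (PT (\<lambda>k. star (hh r E k) (eO i k))))"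
      by (simp add: mulC_assoc mulC_PT_PT)
    also have "\<dots> = Tlin ?Q (mulC one N n Y (PT (hh r (e # E))))"
    proof (rule Tlin_PT_cong[OF P])
      fix B assume B: "B \<in> blocks ?Q"
      have PE: "good (e # E)" using Cons.prems by auto
      have Bb: "B \<in> blocks (Qr r (e # E))" using B QQ by simp
      have m: "Min B \<in> B" using Min_in[OF block_finite[OF P B] block_ne[OF P B]] .
      have fin: "finite B" using block_finite[OF P B] .
      have new: "BS.F (hh r (e # E)) B = pw (hcx r (e # E) (Min B))" by (rule F_hh[OF assms(1) PE Bb m])
      have old: "BS.F (hh r E) B = pw (hcx r E (Min B))" by (rule F_hh[OF assms(1) g(1) B m])
      have dist: "BS.F (\<lambda>k. star (hh r E k) (eO i k)) B = star (BS.F (hh r E) B) (BS.F (eO i) B)"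
        by (rule BS.distrib)
      show "BS.F (\<lambda>k. star (hh r E k) (eO i k)) B = BS.F (hh r (e # E)) B"
      proof (cases "i \<in> B")
        case True
        have "BS.F (eO i) B = omega" using F_single[OF fin True, of "eO i"] by (simp add: eO_def)
        moreover have "(Min B, i) \<in> ?Q" using True m block_uniq[OF P B] by (metis Image_singleton_iff)
        moreover have "hcx r E i = hcx r E (Min B)"
          using hcx_const[OF assms(1) g(1) calculation(2)] by simp
        ultimately show ?thesis using dist old new e \<open>(i, j) \<in> ?Q\<close> by (simp add: pw_Suc')
      next
        case False
        have "BS.F (eO i) B = del one" by (rule F_none) (use False in \<open>auto simp: eO_def\<close>)
        moreover have "\<not> ((Min B, i) \<in> ?Q \<or> (Min B, j) \<in> ?Q)"
        proof
          assume "(Min B, i) \<in> ?Q \<or> (Min B, j) \<in> ?Q"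
          hence "(Min B, i) \<in> ?Q" using part_trans[OF P _ part_sym[OF P True]] by blast
          thus False using False m block_uniq[OF P B] by auto
        qed
        ultimately show ?thesis using dist old new e by (simp add: star_del_one_right)
      qed
    qed
    finally show ?thesis using L QQ by simp
  qed
qed

end

definition sc :: "(nat \<Rightarrow> nat) \<Rightarrow> (nat \<times> nat) set" where
  "sc p = {(x, y). \<exists>k. (p ^^ k) x = y}"

lemma sc_refl: "(x, x) \<in> sc p" unfolding sc_def by (auto intro: exI[of _ 0])

lemma sc_trans: "(x, y) \<in> sc p \<Longrightarrow> (y, z) \<in> sc p \<Longrightarrow> (x, z) \<in> sc p"
  unfolding sc_def by clarsimp (metis funpow_add o_apply)

lemma sc_step: "(x, p x) \<in> sc p" unfolding sc_def by (auto intro: exI[of _ 1])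

lemma sc_sym: assumes "p permutes S" "finite S" "(x, y) \<in> sc p" shows "(y, x) \<in> sc p"
proof -
  obtain m where m: "(p ^^ m) x = y" using assms(3) unfolding sc_def by auto
  have "permutation p" using assms(1,2) permutation_permutes by blast
  then obtain q where q: "(p ^^ q) = id" "q > 0" by (rule permutation_is_nilpotent)
  have qm: "(p ^^ (q * m)) = id" using q(1) by (metis funpow_mult id_funpow)
  have "(p ^^ ((q - 1) * m)) y = (p ^^ ((q - 1) * m + m)) x" using m by (simp add: funpow_add)
  also have "(q - 1) * m + m = q * m" using q(2) by (cases q) auto
  finally have "(p ^^ ((q - 1) * m)) y = x" using qm by simp
  thus ?thesis unfolding sc_def by auto
qed

lemma sc_lt: assumes "p permutes {..<(n::nat)}" "(x, y) \<in> sc p" shows "x < n \<longleftrightarrow> y < n"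
proof -
  obtain k where "(p ^^ k) x = y" using assms(2) unfolding sc_def by auto
  moreover have "(p ^^ k) permutes {..<n}" by (rule permutes_funpow[OF assms(1)])
  ultimately show ?thesis using permutes_in_image by fastforce
qed

lemma sc_funpow: "(x, (p ^^ k) x) \<in> sc p" unfolding sc_def by auto

context FRn begin

lemma part_sc: assumes "p permutes {..<n}" shows "part (sc p)"
  unfolding part_def
proof (intro conjI allI impI)
  show "equiv UNIV (sc p)"
  proof (rule equivI)
    show "sc p \<subseteq> UNIV \<times> UNIV" by simp
    show "refl (sc p)" unfolding refl_on_def using sc_refl by blast
    show "sym (sc p)" unfolding sym_def using sc_sym[OF assms] by blast
    show "trans (sc p)" unfolding trans_def using sc_trans by blast
  qed
  fix x y assume "(x, y) \<in> sc p" thus "(x < n) = (y < n)" by (rule sc_lt[OF assms])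
qed

lemma orbits_blocks: "orbits n p = blocks (sc p)"
  unfolding orbits_def blocks_def sc_def by auto

lemma fusl_F: "distinct xs \<Longrightarrow> fusl one N (map a xs) = BS.F (\<lambda>k. del (a k)) (set xs)"
proof (induction xs)
  case Nil thus ?case by (simp add: BS.empty)
next
  case (Cons x xs)
  have "fusl one N (map a (x # xs)) = star (del (a x)) (fusl one N (map a xs))"
    by (rule ext) (simp add: star_del_left mult_ac)
  thus ?case using Cons by (simp add: BS.insert)
qed

lemma fusl_block: "finite Ob \<Longrightarrow> fusl one N (map a (sorted_list_of_set Ob)) = BS.F (\<lambda>k. del (a k)) Ob"
  by (simp add: fusl_F)

definition chat :: "(nat \<times> nat) set \<Rightarrow> (nat \<Rightarrow> 'l) \<Rightarrow> nat \<Rightarrow> 'l \<Rightarrow> int" where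
  "chat r c = (\<lambda>k. if k = Min (r `` {k}) then del (dual (c k)) else del one)"

lemma F_min: assumes "part r" "B \<in> blocks r"
  shows "BS.F (\<lambda>k. if k = Min (r `` {k}) then g k else del one) B = g (Min B)"
proof -
  have fin: "finite B" by (rule block_finite[OF assms])
  have m: "Min B \<in> B" using Min_in[OF fin block_ne[OF assms]] .
  have cl: "r `` {k} = B" if "k \<in> B" for k using block_uniq[OF assms that] by simp
  show ?thesis using F_single[OF fin m, of "\<lambda>k. if k = Min (r `` {k}) then g k else del one"] cl m
    by simp
qed

lemma conf_Tlin: assumes "p permutes {..<n}" "c \<in> fixvecs one n p"
  shows "conf one N n p x c = Tlin (sc p) (mulC one N n x (PT (chat (sc p) c)))"
proof -
  have P: "part (sc p)" by (rule part_sc[OF assms(1)])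
  have "Tlin (sc p) (mulC one N n x (PT (chat (sc p) c))) =
     (\<Sum>w\<in>V. x w * (\<Prod>B\<in>blocks (sc p). star (BS.F (chat (sc p) c) B) (BS.F (\<lambda>i. del (w i)) B) one))"
    by (simp add: mulC_comm[of x] principle[OF P])
  also have "\<dots> = (\<Sum>w\<in>V. x w * (\<Prod>B\<in>blocks (sc p). fusl one N (map w (sorted_list_of_set B)) (c (Min B))))"
  proof (intro sum.cong refl arg_cong[where f="\<lambda>t. _ * t"] prod.cong)
    fix w B assume B: "B \<in> blocks (sc p)"
    have "BS.F (chat (sc p) c) B = del (dual (c (Min B)))"
      unfolding chat_def by (rule F_min[OF P B])
    hence "star (BS.F (chat (sc p) c) B) (BS.F (\<lambda>i. del (w i)) B) one = BS.F (\<lambda>i. del (w i)) B (c (Min B))"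
      by (simp add: star_comm[of "del _"] eps_star_del)
    thus "star (BS.F (chat (sc p) c) B) (BS.F (\<lambda>i. del (w i)) B) one = fusl one N (map w (sorted_list_of_set B)) (c (Min B))"
      using fusl_block[OF block_finite[OF P B]] by simp
  qed
  also have "\<dots> = conf one N n p x c"
    unfolding conf_def using assms(2) by (simp add: orbits_blocks)
  finally show ?thesis by simp
qed

lemma TB: assumes "part R" "supp X"
  shows "Tlin R (mulC one N n X Y) = (\<Sum>v\<in>V. X v * (\<Sum>w\<in>V. Y w *
     (\<Prod>B\<in>blocks R. star (BS.F (\<lambda>i. del (v i)) B) (BS.F (\<lambda>i. del (w i)) B) one)))"
proof -
  have "mulC one N n X Y = (\<lambda>c. \<Sum>v\<in>V. X v * mulC one N n (PT (\<lambda>i. del (v i))) Y c)"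
  proof
    fix c
    have "mulC one N n X Y c = mulC one N n (\<lambda>u. \<Sum>v\<in>V. X v * PT (\<lambda>i. del (v i)) u) Y c"
      using decomp[OF assms(2)] by metis
    also have "\<dots> = (\<Sum>v\<in>V. mulC one N n (\<lambda>u. X v * PT (\<lambda>i. del (v i)) u) Y c)"
      by (rule mulC_sum_left)
    also have "\<dots> = (\<Sum>v\<in>V. X v * mulC one N n (PT (\<lambda>i. del (v i))) Y c)"
      by (simp add: mulC_smult_left)
    finally show "mulC one N n X Y c = (\<Sum>v\<in>V. X v * mulC one N n (PT (\<lambda>i. del (v i))) Y c)" .
  qed
  hence "Tlin R (mulC one N n X Y) = (\<Sum>v\<in>V. X v * Tlin R (mulC one N n (PT (\<lambda>i. del (v i))) Y))"
    by (simp add: Tlin_sum)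
  thus ?thesis by (simp add: principle[OF assms(1)])
qed

definition ahat :: "(nat \<times> nat) set \<Rightarrow> (nat \<Rightarrow> 'l) \<Rightarrow> nat \<Rightarrow> 'l \<Rightarrow> int" where
  "ahat r a = (\<lambda>k. if k = Min (r `` {k}) then del (a k) else del one)"

lemma fix_const: assumes "p permutes {..<n}" "a \<in> fixvecs one n p" "(x, y) \<in> sc p" "x < n"
  shows "a y = a x"
proof -
  obtain k where k: "(p ^^ k) x = y" using assms(3) unfolding sc_def by auto
  have "a ((p ^^ k) x) = a x" for k
  proof (induction k)
    case 0 thus ?case by simp
  next
    case (Suc k)
    have "(p ^^ k) x < n" using sc_lt[OF assms(1) sc_funpow] assms(4) by blast
    hence "a (p ((p ^^ k) x)) = a ((p ^^ k) x)" using assms(2) unfolding fixvecs_def by auto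
    thus ?case using Suc by simp
  qed
  thus ?thesis using k by blast
qed

lemma block_Union: assumes "p permutes {..<n}" "part R" "sc p \<subseteq> R" "B \<in> blocks R"
  shows "BS.F g B = BS.F (\<lambda>Ob. BS.F g Ob) {Ob \<in> blocks (sc p). Ob \<subseteq> B}"
proof -
  have P: "part (sc p)" by (rule part_sc[OF assms(1)])
  let ?J = "{Ob \<in> blocks (sc p). Ob \<subseteq> B}"
  have U: "\<Union>?J = B"
  proof
    show "\<Union>?J \<subseteq> B" by auto
    show "B \<subseteq> \<Union>?J"
    proof
      fix x assume x: "x \<in> B"
      have xn: "x < n" using block_sub[OF assms(2,4)] x by auto
      have "sc p `` {x} \<subseteq> B"
      proof
        fix y assume "y \<in> sc p `` {x}"
        hence "(x, y) \<in> R" using assms(3) by auto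
        thus "y \<in> B" using block_uniq[OF assms(2,4) x] by auto
      qed
      moreover have "sc p `` {x} \<in> blocks (sc p)" "x \<in> sc p `` {x}" using block_of[OF P xn] by auto
      ultimately show "x \<in> \<Union>?J" by blast
    qed
  qed
  have "BS.F g (\<Union>?J) = (BS.F \<circ> BS.F) g ?J"
  proof (rule BS.Union_disjoint)
    show "\<forall>A\<in>?J. finite A" using block_finite[OF P] by auto
    show "\<forall>A\<in>?J. \<forall>B\<in>?J. A \<noteq> B \<longrightarrow> A \<inter> B = {}" using blocks_disj[OF P] by auto
  qed
  thus ?thesis using U by (simp add: o_def)
qed

lemma DC: assumes "p permutes {..<n}" "part R" "sc p \<subseteq> R" "supp d"
    "conf one N n p d = basis a" "a \<in> fixvecs one n p"
  shows "Tlin R (mulC one N n d Z) = Tlin R (mulC one N n (PT (ahat (sc p) a)) Z)"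
proof -
  have P: "part (sc p)" by (rule part_sc[OF assms(1)])
  let ?I = "blocks (sc p)"
  define J where "J = (\<lambda>B. {Ob \<in> ?I. Ob \<subseteq> B})"
  define spread where "spread = (\<lambda>c :: nat set \<Rightarrow> 'l. \<lambda>k. if k < n then c (sc p `` {k}) else one)"
  define ca where "ca = restrict (\<lambda>Ob. a (Min Ob)) ?I"
  have finI: "finite ?I" by (rule blocks_finite)
  have minI: "Min Ob \<in> Ob" "Min Ob < n" "sc p `` {Min Ob} = Ob" if "Ob \<in> ?I" for Ob
  proof -
    show m: "Min Ob \<in> Ob" using Min_in[OF block_finite[OF P that] block_ne[OF P that]] .
    show "Min Ob < n" using block_sub[OF P that] m by auto
    show "sc p `` {Min Ob} = Ob" using block_uniq[OF P that m] by simp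
  qed
  have spread_fix: "spread c \<in> fixvecs one n p" for c
  proof -
    have "spread c (p i) = spread c i" if "i < n" for i
    proof -
      have "p i < n" using permutes_in_image[OF assms(1)] that by auto
      moreover have "sc p `` {p i} = sc p `` {i}" using part_cls_eq[OF P sc_step[of i p]] by simp
      ultimately show ?thesis using that by (simp add: spread_def)
    qed
    moreover have "spread c \<in> V" by (simp add: in_V spread_def)
    ultimately show ?thesis by (simp add: fixvecs_def)
  qed
  have spread_eq: "spread c = a \<longleftrightarrow> c = ca" if c: "c \<in> PiE ?I (\<lambda>_. UNIV)" for c
  proof
    assume sa: "spread c = a"
    show "c = ca"
    proof
      fix Ob show "c Ob = ca Ob"
      proof (cases "Ob \<in> ?I")
        case True
        have "c Ob = spread c (Min Ob)" using minI[OF True] by (simp add: spread_def)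
        thus ?thesis using sa True by (simp add: ca_def)
      next
        case False thus ?thesis using c by (simp add: ca_def PiE_def extensional_def)
      qed
    qed
  next
    assume "c = ca"
    show "spread c = a"
    proof
      fix k show "spread c k = a k"
      proof (cases "k < n")
        case True
        have B: "sc p `` {k} \<in> ?I" "k \<in> sc p `` {k}" using block_of[OF P True] by auto
        have "(k, Min (sc p `` {k})) \<in> sc p" using minI(1)[OF B(1)] by auto
        hence "a (Min (sc p `` {k})) = a k" by (rule fix_const[OF assms(1,6) _ True])
        thus ?thesis using True B \<open>c = ca\<close> by (simp add: spread_def ca_def)
      next
        case False
        thus ?thesis using assms(6) by (simp add: spread_def fixvecs_def in_V)
      qed
    qed
  qed
  have ca_in: "ca \<in> PiE ?I (\<lambda>_. UNIV)" by (simp add: ca_def)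
  have conf_spread: "(\<Sum>v\<in>V. d v * (\<Prod>Ob\<in>?I. BS.F (\<lambda>i. del (v i)) Ob (c Ob))) = (if c = ca then 1 else 0)"
    if c: "c \<in> PiE ?I (\<lambda>_. UNIV)" for c
  proof -
    have "(\<Sum>v\<in>V. d v * (\<Prod>Ob\<in>?I. BS.F (\<lambda>i. del (v i)) Ob (c Ob))) = conf one N n p d (spread c)"
      unfolding conf_def using spread_fix[of c]
      by (auto simp: orbits_blocks fusl_block[OF block_finite[OF P]] minI spread_def intro!: sum.cong prod.cong)
    also have "\<dots> = (if c = ca then 1 else 0)"
      using assms(5) spread_eq[OF c] by (simp add: basis_def)
    finally show ?thesis .
  qed
  have RHS: "Tlin R (mulC one N n (PT (ahat (sc p) a)) Z) =
     (\<Sum>w\<in>V. Z w * (\<Prod>B\<in>blocks R. star (BS.F (ahat (sc p) a) B) (BS.F (\<lambda>i. del (w i)) B) one))"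
    by (rule principle[OF assms(2)])
  have LHS: "Tlin R (mulC one N n d Z) = (\<Sum>w\<in>V. Z w * (\<Sum>v\<in>V. d v *
     (\<Prod>B\<in>blocks R. star (BS.F (\<lambda>i. del (v i)) B) (BS.F (\<lambda>i. del (w i)) B) one)))"
  proof -
    have "Tlin R (mulC one N n d Z) = (\<Sum>v\<in>V. \<Sum>w\<in>V. Z w * (d v *
     (\<Prod>B\<in>blocks R. star (BS.F (\<lambda>i. del (v i)) B) (BS.F (\<lambda>i. del (w i)) B) one)))"
      by (simp add: TB[OF assms(2,4)] sum_distrib_left mult_ac)
    also have "\<dots> = (\<Sum>w\<in>V. \<Sum>v\<in>V. Z w * (d v *
     (\<Prod>B\<in>blocks R. star (BS.F (\<lambda>i. del (v i)) B) (BS.F (\<lambda>i. del (w i)) B) one)))"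
      by (rule sum.swap)
    finally show ?thesis by (simp add: sum_distrib_left)
  qed
  show ?thesis unfolding LHS RHS
  proof (intro sum.cong refl arg_cong[where f="\<lambda>t. _ * t"])
    fix w :: "nat \<Rightarrow> 'l"
    define G where "G = (\<lambda>X :: nat set \<Rightarrow> 'l \<Rightarrow> int. \<Prod>B\<in>blocks R. star (BS.F X (J B)) (BS.F (\<lambda>i. del (w i)) B) one)"
    have Gcong: "G X = G X'" if "\<And>Ob. Ob \<in> ?I \<Longrightarrow> X Ob = X' Ob" for X X'
      unfolding G_def J_def by (intro prod.cong refl arg_cong[where f="\<lambda>t. star t _ one"] BS.cong) (auto simp: that)
    have Glin: "G X = (\<Sum>x\<in>UNIV. X Ob x * G (X(Ob := del x)))" if Ob: "Ob \<in> ?I" for Ob X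
    proof -
      let ?B0 = "R `` {Min Ob}"
      have mn: "Min Ob < n" "Min Ob \<in> Ob" using minI[OF Ob] by auto
      have B0: "?B0 \<in> blocks R" using block_of[OF assms(2) mn(1)] by auto
      have ObB0: "Ob \<subseteq> ?B0" using minI(3)[OF Ob] assms(3) by auto
      show ?thesis unfolding G_def
      proof (rule lin_prod)
        show "finite (blocks R)" by (rule blocks_finite)
        show "?B0 \<in> blocks R" by (rule B0)
        show "Ob \<in> J ?B0" using Ob ObB0 by (simp add: J_def)
        show "finite (J ?B0)" using finI by (simp add: J_def)
        fix B assume B: "B \<in> blocks R" "B \<noteq> ?B0"
        show "Ob \<notin> J B"
        proof
          assume "Ob \<in> J B"
          hence "Min Ob \<in> B" using mn(2) by (auto simp: J_def)
          thus False using block_uniq[OF assms(2) B(1)] B(2) by blast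
        qed
      qed
    qed
    have K: "(\<Prod>B\<in>blocks R. star (BS.F (\<lambda>i. del (v i)) B) (BS.F (\<lambda>i. del (w i)) B) one) = G (\<lambda>Ob. BS.F (\<lambda>i. del (v i)) Ob)" for v
      unfolding G_def J_def by (intro prod.cong refl) (simp add: block_Union[OF assms(1-3)])
    have Ka: "(\<Prod>B\<in>blocks R. star (BS.F (ahat (sc p) a) B) (BS.F (\<lambda>i. del (w i)) B) one) = G (\<lambda>Ob. del (ca Ob))"
    proof -
      have "(\<Prod>B\<in>blocks R. star (BS.F (ahat (sc p) a) B) (BS.F (\<lambda>i. del (w i)) B) one) = G (\<lambda>Ob. BS.F (ahat (sc p) a) Ob)"
        unfolding G_def J_def by (intro prod.cong refl) (simp add: block_Union[OF assms(1-3)])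
      also have "\<dots> = G (\<lambda>Ob. del (ca Ob))"
      proof (rule Gcong)
        fix Ob assume Ob: "Ob \<in> ?I"
        show "BS.F (ahat (sc p) a) Ob = del (ca Ob)"
          unfolding ahat_def using F_min[OF P Ob, of "\<lambda>k. del (a k)"] Ob by (simp add: ca_def)
      qed
      finally show ?thesis .
    qed
    have "(\<Sum>v\<in>V. d v * G (\<lambda>Ob. BS.F (\<lambda>i. del (v i)) Ob)) =
      (\<Sum>v\<in>V. d v * (\<Sum>c\<in>PiE ?I (\<lambda>_. UNIV). (\<Prod>Ob\<in>?I. BS.F (\<lambda>i. del (v i)) Ob (c Ob)) * G (\<lambda>Ob. del (c Ob))))"
    proof (intro sum.cong refl arg_cong[where f="\<lambda>t. _ * t"])
      fix v :: "nat \<Rightarrow> 'l"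
      have "G (\<lambda>Ob. BS.F (\<lambda>i. del (v i)) Ob) = (\<Sum>c\<in>PiE ?I (\<lambda>_. UNIV). (\<Prod>Ob\<in>?I. BS.F (\<lambda>i. del (v i)) Ob (c Ob)) *
          G (\<lambda>Ob. if Ob \<in> ?I then del (c Ob) else BS.F (\<lambda>i. del (v i)) Ob))"
        by (rule GEN[OF finI Glin])
      also have "\<dots> = (\<Sum>c\<in>PiE ?I (\<lambda>_. UNIV). (\<Prod>Ob\<in>?I. BS.F (\<lambda>i. del (v i)) Ob (c Ob)) * G (\<lambda>Ob. del (c Ob)))"
        by (intro sum.cong refl arg_cong[where f="\<lambda>t. _ * t"] Gcong) simp
      finally show "G (\<lambda>Ob. BS.F (\<lambda>i. del (v i)) Ob) = \<dots>" .
    qed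
    also have "\<dots> = (\<Sum>c\<in>PiE ?I (\<lambda>_. UNIV). (\<Sum>v\<in>V. d v * (\<Prod>Ob\<in>?I. BS.F (\<lambda>i. del (v i)) Ob (c Ob))) * G (\<lambda>Ob. del (c Ob)))"
      by (simp add: sum_distrib_left sum_distrib_right sum.swap[of _ V] mult_ac)
    also have "\<dots> = (\<Sum>c\<in>PiE ?I (\<lambda>_. UNIV). if c = ca then G (\<lambda>Ob. del (c Ob)) else 0)"
      by (intro sum.cong refl) (simp add: conf_spread)
    also have "\<dots> = G (\<lambda>Ob. del (ca Ob))"
      using ca_in by (simp add: sum.delta finite_PiE finI)
    finally show "(\<Sum>v\<in>V. d v * (\<Prod>B\<in>blocks R. star (BS.F (\<lambda>i. del (v i)) B) (BS.F (\<lambda>i. del (w i)) B) one)) =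
      (\<Prod>B\<in>blocks R. star (BS.F (ahat (sc p) a) B) (BS.F (\<lambda>i. del (w i)) B) one)"
      by (simp add: K Ka)
  qed
qed

end

lemma order_exists: assumes "p permutes {..<(n::nat)}" obtains m where "(p ^^ m) = id" "m > 0"
proof -
  have "permutation p" using assms permutation_permutes by blast
  thus thesis using permutation_is_nilpotent that by blast
qed

context FRn begin

lemma swap_permutes: assumes "p permutes {..<n}" "i < n" "j < n"
  shows "(transpose i j \<circ> p) permutes {..<n}"
  by (rule permutes_compose[OF assms(1) permutes_swap_id]) (use assms in auto)

lemma merge_ij: assumes "p permutes {..<n}" "i < n" "j < n" "i \<noteq> j" "(i, j) \<notin> sc p"
  shows "(i, j) \<in> sc (transpose i j \<circ> p)"
proof (rule ccontr)
  let ?q = "transpose i j \<circ> p"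
  let ?S = "sc ?q `` {i}"
  assume nj: "(i, j) \<notin> sc ?q"
  have inS: "(p ^^ k) i \<in> ?S" for k
  proof (induction k)
    case 0 show ?case using sc_refl by simp
  next
    case (Suc k)
    let ?y = "(p ^^ k) i"
    have "p ?y \<noteq> j" using assms(5) sc_funpow[where x=i and p=p and k="Suc k"] by auto
    show ?case
    proof (cases "p ?y = i")
      case True thus ?thesis using sc_refl by simp
    next
      case False
      hence "?q ?y = p ?y" using \<open>p ?y \<noteq> j\<close> by (simp add: transpose_def)
      moreover have "(?y, ?q ?y) \<in> sc ?q" by (rule sc_step)
      ultimately show ?thesis using Suc sc_trans by fastforce
    qed
  qed
  obtain m where m: "(p ^^ m) = id" "m > 0" using order_exists[OF assms(1)] by blast
  let ?y0 = "(p ^^ (m - 1)) i"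
  have "p ?y0 = (p ^^ m) i" using m(2) by (metis Suc_pred' funpow.simps(2) o_apply)
  hence "p ?y0 = i" using m(1) by simp
  hence "?q ?y0 = j" by simp
  moreover have "(?y0, ?q ?y0) \<in> sc ?q" by (rule sc_step)
  ultimately have "(i, j) \<in> sc ?q" using inS[of "m - 1"] sc_trans by fastforce
  thus False using nj by simp
qed

lemma merge_sub: assumes "p permutes {..<n}" "i < n" "j < n" "i \<noteq> j" "(i, j) \<notin> sc p"
  shows "sc p \<subseteq> sc (transpose i j \<circ> p)"
proof -
  let ?q = "transpose i j \<circ> p"
  have qp: "?q permutes {..<n}" by (rule swap_permutes[OF assms(1-3)])
  have ij: "(i, j) \<in> sc ?q" by (rule merge_ij[OF assms])
  have ji: "(j, i) \<in> sc ?q" by (rule sc_sym[OF qp _ ij]) simp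
  have step: "(x, p x) \<in> sc ?q" for x
  proof -
    have qx: "(x, ?q x) \<in> sc ?q" by (rule sc_step)
    consider "p x = i" | "p x = j" | "p x \<noteq> i" "p x \<noteq> j" by blast
    thus ?thesis
    proof cases
      case 1 hence "?q x = j" by simp
      thus ?thesis using 1 qx ji sc_trans by metis
    next
      case 2 hence "?q x = i" by simp
      thus ?thesis using 2 qx ij sc_trans by metis
    next
      case 3 hence "?q x = p x" by (simp add: transpose_def)
      thus ?thesis using qx by simp
    qed
  qed
  show ?thesis
  proof
    fix z assume "z \<in> sc p"
    then obtain x k where z: "z = (x, (p ^^ k) x)" unfolding sc_def by auto
    have "(x, (p ^^ k) x) \<in> sc ?q"
    proof (induction k)
      case 0 show ?case by (simp add: sc_refl)
    next
      case (Suc k) thus ?case using step[of "(p ^^ k) x"] sc_trans by fastforce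
    qed
    thus "z \<in> sc ?q" using z by simp
  qed
qed

lemma merge: assumes "p permutes {..<n}" "i < n" "j < n" "i \<noteq> j" "(i, j) \<notin> sc p"
  shows "sc (transpose i j \<circ> p) = join (sc p) i j"
proof
  let ?q = "transpose i j \<circ> p"
  have P: "part (sc p)" by (rule part_sc[OF assms(1)])
  have qp: "?q permutes {..<n}" by (rule swap_permutes[OF assms(1-3)])
  have Pq: "part (sc ?q)" by (rule part_sc[OF qp])
  have Pj: "part (join (sc p) i j)" by (rule join_part[OF P assms(2,3)])
  have ijJ: "(i, j) \<in> join (sc p) i j" using join_char[OF P] sc_refl by blast
  have jiJ: "(j, i) \<in> join (sc p) i j" using join_char[OF P] sc_refl by blast
  have rJ: "sc p \<subseteq> join (sc p) i j" unfolding join_def by auto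
  have step: "(y, ?q y) \<in> join (sc p) i j" for y
  proof -
    have py: "(y, p y) \<in> sc p" by (rule sc_step)
    consider "p y = i" | "p y = j" | "p y \<noteq> i" "p y \<noteq> j" by blast
    thus ?thesis
    proof cases
      case 1 hence "?q y = j" by simp
      thus ?thesis using 1 py rJ ijJ part_trans[OF Pj] by (metis subsetD)
    next
      case 2 hence "?q y = i" by simp
      thus ?thesis using 2 py rJ jiJ part_trans[OF Pj] by (metis subsetD)
    next
      case 3 hence "?q y = p y" by (simp add: transpose_def)
      thus ?thesis using py rJ by auto
    qed
  qed
  show "sc ?q \<subseteq> join (sc p) i j"
  proof
    fix z assume "z \<in> sc ?q"
    then obtain x k where z: "z = (x, (?q ^^ k) x)" unfolding sc_def by auto
    have "(x, (?q ^^ k) x) \<in> join (sc p) i j"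
    proof (induction k)
      case 0 show ?case using part_refl[OF Pj] by simp
    next
      case (Suc k)
      have "(x, ?q ((?q ^^ k) x)) \<in> join (sc p) i j" by (rule part_trans[OF Pj Suc.IH step])
      thus ?case by (simp add: o_def)
    qed
    thus "z \<in> join (sc p) i j" using z by simp
  qed
  show "join (sc p) i j \<subseteq> sc ?q"
  proof
    fix z assume z: "z \<in> join (sc p) i j"
    obtain x y where xy: "z = (x, y)" by (cases z)
    have sub: "sc p \<subseteq> sc ?q" by (rule merge_sub[OF assms])
    have ij: "(i, j) \<in> sc ?q" by (rule merge_ij[OF assms])
    have ji: "(j, i) \<in> sc ?q" by (rule part_sym[OF Pq ij])
    from z xy have "(x, y) \<in> sc p \<or> ((x, i) \<in> sc p \<and> (j, y) \<in> sc p) \<or> ((x, j) \<in> sc p \<and> (i, y) \<in> sc p)"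
      using join_char[OF P] by blast
    hence "(x, y) \<in> sc ?q"
    proof (elim disjE conjE)
      assume "(x, y) \<in> sc p" thus ?thesis using sub by auto
    next
      assume a: "(x, i) \<in> sc p" "(j, y) \<in> sc p"
      show ?thesis using part_trans[OF Pq part_trans[OF Pq subsetD[OF sub a(1)] ij] subsetD[OF sub a(2)]] .
    next
      assume a: "(x, j) \<in> sc p" "(i, y) \<in> sc p"
      show ?thesis using part_trans[OF Pq part_trans[OF Pq subsetD[OF sub a(1)] ji] subsetD[OF sub a(2)]] .
    qed
    thus "z \<in> sc ?q" using xy by simp
  qed
qed

lemma split_not: assumes "p permutes {..<n}" "i < n" "j < n" "i \<noteq> j" "(i, j) \<in> sc p"
  shows "(i, j) \<notin> sc (transpose i j \<circ> p)"
proof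
  let ?q = "transpose i j \<circ> p"
  assume qij: "(i, j) \<in> sc ?q"
  have ex: "\<exists>k. (p ^^ k) i = j" using assms(5) unfolding sc_def by auto
  define k0 where "k0 = (LEAST k. (p ^^ k) i = j)"
  have k0: "(p ^^ k0) i = j" unfolding k0_def by (rule LeastI_ex[OF ex])
  have mink: "(p ^^ k) i \<noteq> j" if "k < k0" for k using not_less_Least that unfolding k0_def by blast
  have k0pos: "k0 > 0" using k0 assms(4) by (cases k0) auto
  have noti: "(p ^^ k) i \<noteq> i" if "0 < k" "k < k0" for k
  proof
    assume "(p ^^ k) i = i"
    hence "(p ^^ (k0 - k)) i = (p ^^ (k0 - k)) ((p ^^ k) i)" by simp
    also have "\<dots> = (p ^^ (k0 - k + k)) i" by (simp add: funpow_add)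
    also have "k0 - k + k = k0" using that by simp
    finally have "(p ^^ (k0 - k)) i = j" using k0 by simp
    thus False using mink[of "k0 - k"] that by simp
  qed
  have agree: "(?q ^^ k) i = (p ^^ k) i" if "k < k0" for k
    using that
  proof (induction k)
    case 0 thus ?case by simp
  next
    case (Suc k)
    have "(p ^^ Suc k) i \<noteq> i" "(p ^^ Suc k) i \<noteq> j" using noti[of "Suc k"] mink[of "Suc k"] Suc.prems by auto
    thus ?case using Suc by (simp add: transpose_def)
  qed
  have "(?q ^^ k0) i = ?q ((?q ^^ (k0 - 1)) i)" using k0pos by (metis Suc_pred' funpow.simps(2) o_apply)
  also have "\<dots> = ?q ((p ^^ (k0 - 1)) i)" using agree[of "k0 - 1"] k0pos by simp
  also have "p ((p ^^ (k0 - 1)) i) = (p ^^ k0) i" using k0pos by (metis Suc_pred' funpow.simps(2) o_apply)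
  hence "?q ((p ^^ (k0 - 1)) i) = i" using k0 by simp
  finally have per: "(?q ^^ k0) i = i" .
  obtain m where m: "(?q ^^ m) i = j" using qij unfolding sc_def by auto
  have "(?q ^^ (m mod k0)) i = j" using funpow_mod_eq[where f="?q" and n=k0 and x=i and m=m, OF per] m by simp
  moreover have "m mod k0 < k0" using k0pos by simp
  ultimately have "(p ^^ (m mod k0)) i = j" using agree by simp
  thus False using mink \<open>m mod k0 < k0\<close> by blast
qed

lemma split: assumes "p permutes {..<n}" "i < n" "j < n" "i \<noteq> j" "(i, j) \<in> sc p"
  shows "sc p = join (sc (transpose i j \<circ> p)) i j" "(i, j) \<notin> sc (transpose i j \<circ> p)"
proof -
  let ?q = "transpose i j \<circ> p"
  have qp: "?q permutes {..<n}" by (rule swap_permutes[OF assms(1-3)])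
  show n: "(i, j) \<notin> sc ?q" by (rule split_not[OF assms])
  have "transpose i j \<circ> ?q = p" by (auto simp: fun_eq_iff transpose_def)
  thus "sc p = join (sc ?q) i j" using merge[OF qp assms(2-4) n] by simp
qed

end

definition edg :: "(nat \<times> nat) list \<Rightarrow> (nat \<times> nat) set" where
  "edg E = set E \<union> converse (set E)"

lemma edg_Cons: "edg ((i, j) # E) = edg E \<union> {(i, j), (j, i)}"
  by (auto simp: edg_def)

lemma rt_Un1: "(A\<^sup>* \<union> B)\<^sup>* = (A \<union> B)\<^sup>*"
proof (rule rtrancl_subset)
  show "A \<union> B \<subseteq> A\<^sup>* \<union> B" by auto
  show "A\<^sup>* \<union> B \<subseteq> (A \<union> B)\<^sup>*" using rtrancl_mono[of A "A \<union> B"] by auto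
qed

lemma rt_absorb: "B \<subseteq> A\<^sup>* \<Longrightarrow> (A \<union> B)\<^sup>* = A\<^sup>*"
  by (rule rtrancl_subset) auto

fun sel :: "(nat \<times> nat) list \<Rightarrow> (nat \<Rightarrow> nat) \<Rightarrow> (nat \<times> nat) list" where
  "sel [] s = []"
| "sel ((i, j) # ts) s = (if same_cycle (tprod ts \<circ> s) i j then (i, j) # sel ts s else sel ts s)"

lemma same_cycle_sc: "same_cycle p i j \<longleftrightarrow> (i, j) \<in> sc p"
  by (simp add: same_cycle_def sc_def)

lemma tprod_Cons: "tprod ((i, j) # ts) = transpose i j \<circ> tprod ts"
  by (simp add: tprod_def)

lemma tprod_Nil: "tprod [] = id" by (simp add: tprod_def)

lemma sel_sub: "set (sel ts s) \<subseteq> set ts"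
  by (induction ts s rule: sel.induct) auto

definition nsel :: "nat set \<Rightarrow> (nat \<times> nat) list \<Rightarrow> nat" where
  "nsel B E = length (filter (\<lambda>e. fst e \<in> B) E)"

context FRn begin

definition cnt :: "(nat \<times> nat) set \<Rightarrow> nat set \<Rightarrow> nat" where
  "cnt r B = card {Ob \<in> blocks r. Ob \<subseteq> B}"

lemma good_sub: "good E \<Longrightarrow> set E' \<subseteq> set E \<Longrightarrow> good E'"
  by (auto simp: good_def)

lemma tprod_permutes: "good ts \<Longrightarrow> tprod ts permutes {..<n}"
proof (induction ts)
  case Nil show ?case unfolding tprod_Nil by (rule permutes_id)
next
  case (Cons e ts)
  obtain i j where e: "e = (i, j)" by (cases e)
  have "good ts" "i < n" "j < n" using Cons.prems e by (auto simp: good_Cons)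
  hence "(transpose i j \<circ> tprod ts) permutes {..<n}" using Cons.IH swap_permutes by blast
  thus ?case using e by (simp only: tprod_Cons)
qed

lemma Fcalc_OP: "Fcalc one dual N n ts s = OP (sel ts s)"
proof (induction ts)
  case Nil thus ?case by simp
next
  case (Cons e ts)
  obtain i j where e: "e = (i, j)" by (cases e)
  show ?case
  proof (cases "same_cycle (tprod ts \<circ> s) i j")
    case True thus ?thesis using Cons e by simp
  next
    case False thus ?thesis using Cons e by (simp add: mulC_unit OP_supp)
  qed
qed

lemma part_rt: "part r \<Longrightarrow> r\<^sup>* = r"
proof
  assume P: "part r"
  show "r\<^sup>* \<subseteq> r"
  proof
    fix z assume "z \<in> r\<^sup>*"
    then obtain x y where z: "z = (x, y)" "(x, y) \<in> r\<^sup>*" by (cases z) auto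
    from z(2) have "(x, y) \<in> r"
    proof (induction rule: rtrancl_induct)
      case base thus ?case by (rule part_refl[OF P])
    next
      case (step y z) thus ?case using part_trans[OF P] by blast
    qed
    thus "z \<in> r" using z by simp
  qed
qed auto

lemma Qr_char: "part r \<Longrightarrow> good E \<Longrightarrow> Qr r E = (r \<union> edg E)\<^sup>*"
proof (induction E)
  case Nil thus ?case by (simp add: edg_def part_rt)
next
  case (Cons e E)
  obtain i j where e: "e = (i, j)" by (cases e)
  have g: "good E" using Cons.prems e by (simp add: good_Cons)
  have "Qr r (e # E) = ((r \<union> edg E)\<^sup>* \<union> {(i, j), (j, i)})\<^sup>*"
    using e Cons.IH[OF Cons.prems(1) g] by (simp add: join_def)
  also have "\<dots> = (r \<union> edg E \<union> {(i, j), (j, i)})\<^sup>*" by (rule rt_Un1)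
  also have "\<dots> = (r \<union> edg (e # E))\<^sup>*" by (simp only: e edg_Cons Un_assoc)
  finally show ?case .
qed

lemma PI: assumes "s permutes {..<n}" "good ts"
  shows "(sc (tprod ts \<circ> s) \<union> edg (sel ts s))\<^sup>* = (sc s \<union> edg ts)\<^sup>*"
  using assms(2)
proof (induction ts)
  case Nil thus ?case by (simp add: tprod_Nil edg_def)
next
  case (Cons e ts)
  obtain i j where e: "e = (i, j)" by (cases e)
  have g: "good ts" "i < n" "j < n" "i \<noteq> j" using Cons.prems e by (auto simp: good_Cons)
  let ?p' = "tprod ts \<circ> s"
  have p': "?p' permutes {..<n}" by (rule permutes_compose[OF assms(1) tprod_permutes[OF g(1)]])
  have pe: "tprod (e # ts) \<circ> s = transpose i j \<circ> ?p'" using e by (simp add: tprod_Cons o_assoc)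
  have IH: "(sc ?p' \<union> edg (sel ts s))\<^sup>* = (sc s \<union> edg ts)\<^sup>*" by (rule Cons.IH[OF g(1)])
  let ?e = "{(i, j), (j, i)}"
  show ?case
  proof (cases "(i, j) \<in> sc ?p'")
    case True
    have selc: "sel (e # ts) s = (i, j) # sel ts s" using e True by (simp add: same_cycle_sc)
    have sp: "sc ?p' = join (sc (transpose i j \<circ> ?p')) i j" by (rule split(1)[OF p' g(2-4) True])
    have "(sc (tprod (e # ts) \<circ> s) \<union> edg (sel (e # ts) s))\<^sup>* = (sc (transpose i j \<circ> ?p') \<union> ?e \<union> edg (sel ts s))\<^sup>*"
      by (simp only: pe selc edg_Cons) (rule arg_cong[where f=rtrancl], blast)
    also have "\<dots> = ((sc (transpose i j \<circ> ?p') \<union> ?e)\<^sup>* \<union> edg (sel ts s))\<^sup>*" by (rule rt_Un1[symmetric])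
    also have "\<dots> = (sc ?p' \<union> edg (sel ts s))\<^sup>*" by (simp only: sp join_def)
    also have "\<dots> = (sc s \<union> edg ts)\<^sup>*" by (rule IH)
    also have "\<dots> = (sc s \<union> edg ts \<union> ?e)\<^sup>*"
    proof (rule rt_absorb[symmetric])
      have "(i, j) \<in> (sc s \<union> edg ts)\<^sup>*" using True IH[symmetric] by auto
      moreover have "(j, i) \<in> sc ?p'" using sc_sym[OF p' _ True] by simp
      hence "(j, i) \<in> (sc s \<union> edg ts)\<^sup>*" using IH[symmetric] by auto
      ultimately show "?e \<subseteq> (sc s \<union> edg ts)\<^sup>*" by auto
    qed
    also have "\<dots> = (sc s \<union> edg (e # ts))\<^sup>*" by (simp only: e edg_Cons Un_assoc)
    finally show ?thesis .
  next
    case False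
    have selc: "sel (e # ts) s = sel ts s" using e False by (simp add: same_cycle_sc)
    have mg: "sc (transpose i j \<circ> ?p') = join (sc ?p') i j" by (rule merge[OF p' g(2-4) False])
    have "(sc (tprod (e # ts) \<circ> s) \<union> edg (sel (e # ts) s))\<^sup>* = ((sc ?p' \<union> ?e)\<^sup>* \<union> edg (sel ts s))\<^sup>*"
      by (simp only: pe selc mg join_def)
    also have "\<dots> = (sc ?p' \<union> ?e \<union> edg (sel ts s))\<^sup>*" by (rule rt_Un1)
    also have "\<dots> = (sc ?p' \<union> edg (sel ts s) \<union> ?e)\<^sup>*" by (rule arg_cong[where f=rtrancl]) blast
    also have "\<dots> = ((sc ?p' \<union> edg (sel ts s))\<^sup>* \<union> ?e)\<^sup>*" by (rule rt_Un1[symmetric])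
    also have "\<dots> = ((sc s \<union> edg ts)\<^sup>* \<union> ?e)\<^sup>*" by (simp only: IH)
    also have "\<dots> = (sc s \<union> edg ts \<union> ?e)\<^sup>*" by (rule rt_Un1)
    also have "\<dots> = (sc s \<union> edg (e # ts))\<^sup>*" by (simp only: e edg_Cons Un_assoc)
    finally show ?thesis .
  qed
qed

end

lemma nsel_Cons: "nsel B ((i, j) # E) = (if i \<in> B then 1 else 0) + nsel B E"
  by (simp add: nsel_def)

lemma nsel_union: "A \<inter> B = {} \<Longrightarrow> nsel (A \<union> B) E = nsel A E + nsel B E"
  by (induction E) (auto simp: nsel_def)

context FRn begin

lemma CL: assumes P: "part r" and ij: "i < n" "j < n" "(i, j) \<notin> r"
    and cl: "\<And>x y. (x, y) \<in> r \<Longrightarrow> x \<in> B \<longleftrightarrow> y \<in> B"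
  shows "i \<in> B \<Longrightarrow> j \<in> B \<Longrightarrow> cnt (join r i j) B + 1 = cnt r B"
    and "i \<notin> B \<Longrightarrow> j \<notin> B \<Longrightarrow> cnt (join r i j) B = cnt r B"
proof -
  let ?S = "{Ob \<in> blocks r. Ob \<subseteq> B}"
  let ?Bi = "r `` {i}" let ?Bj = "r `` {j}"
  have Bi: "?Bi \<in> blocks r" "i \<in> ?Bi" and Bj: "?Bj \<in> blocks r" "j \<in> ?Bj" using block_of[OF P] ij by auto
  have BiBj: "?Bi \<noteq> ?Bj" using ij(3) Bj(2) by auto
  have notin: "?Bi \<union> ?Bj \<notin> blocks r"
  proof
    assume "?Bi \<union> ?Bj \<in> blocks r"
    hence "?Bi \<union> ?Bj = r `` {i}" using block_uniq[OF P] Bi(2) by blast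
    thus False using Bj(2) ij(3) by auto
  qed
  have S': "{Ob \<in> blocks (join r i j). Ob \<subseteq> B} = {Ob \<in> insert (?Bi \<union> ?Bj) (blocks r - {?Bi, ?Bj}). Ob \<subseteq> B}"
    by (simp add: blocks_join[OF P ij])
  have finS: "finite ?S" using blocks_finite by simp
  {
    assume iB: "i \<in> B" and jB: "j \<in> B"
    have subi: "?Bi \<subseteq> B" using cl iB by auto
    have subj: "?Bj \<subseteq> B" using cl jB by auto
    have "{Ob \<in> insert (?Bi \<union> ?Bj) (blocks r - {?Bi, ?Bj}). Ob \<subseteq> B} = insert (?Bi \<union> ?Bj) (?S - {?Bi, ?Bj})"
      using subi subj by auto
    moreover have "card (insert (?Bi \<union> ?Bj) (?S - {?Bi, ?Bj})) = Suc (card (?S - {?Bi, ?Bj}))"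
      using notin finS by (intro card_insert_disjoint) auto
    moreover have "card (?S - {?Bi, ?Bj}) = card ?S - 2"
    proof -
      have "{?Bi, ?Bj} \<subseteq> ?S" using Bi Bj subi subj by auto
      hence "card (?S - {?Bi, ?Bj}) = card ?S - card {?Bi, ?Bj}" using finS by (simp add: card_Diff_subset)
      thus ?thesis using BiBj by simp
    qed
    moreover have "card ?S \<ge> 2"
    proof -
      have "{?Bi, ?Bj} \<subseteq> ?S" using Bi Bj subi subj by auto
      hence "card {?Bi, ?Bj} \<le> card ?S" using finS by (rule card_mono[rotated])
      thus ?thesis using BiBj by simp
    qed
    ultimately show "cnt (join r i j) B + 1 = cnt r B" unfolding cnt_def using S' by simp
  }
  {
    assume iB: "i \<notin> B" and jB: "j \<notin> B"
    have "{Ob \<in> insert (?Bi \<union> ?Bj) (blocks r - {?Bi, ?Bj}). Ob \<subseteq> B} = ?S"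
      using iB jB Bi(2) Bj(2) by auto
    thus "cnt (join r i j) B = cnt r B" unfolding cnt_def using S' by simp
  }
qed

lemma sc_closed: assumes "\<And>x. p x \<in> B \<longleftrightarrow> x \<in> B" "(x, y) \<in> sc p" shows "x \<in> B \<longleftrightarrow> y \<in> B"
proof -
  obtain k where k: "(p ^^ k) x = y" using assms(2) unfolding sc_def by auto
  have "(p ^^ k) x \<in> B \<longleftrightarrow> x \<in> B" for k by (induction k) (simp_all add: assms(1))
  thus ?thesis using k by blast
qed

lemma tprod_pres: assumes "\<forall>(i, j)\<in>set ts. i \<in> B \<longleftrightarrow> j \<in> B" shows "tprod ts x \<in> B \<longleftrightarrow> x \<in> B"
  using assms
proof (induction ts arbitrary: x)
  case Nil thus ?case by (simp add: tprod_Nil)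
next
  case (Cons e ts)
  obtain i j where e: "e = (i, j)" by (cases e)
  have "(i \<in> B \<longleftrightarrow> j \<in> B)" using Cons.prems e by auto
  hence "transpose i j y \<in> B \<longleftrightarrow> y \<in> B" for y by (auto simp: transpose_def)
  thus ?case using Cons e by (simp add: tprod_Cons)
qed

lemma PC: assumes "s permutes {..<n}" "good ts" "\<forall>(i, j)\<in>set ts. i \<in> B \<longleftrightarrow> j \<in> B" "\<And>x. s x \<in> B \<longleftrightarrow> x \<in> B"
  shows "2 * nsel B (sel ts s) + cnt (sc s) B = nsel B ts + cnt (sc (tprod ts \<circ> s)) B"
  using assms(2,3)
proof (induction ts)
  case Nil thus ?case by (simp add: nsel_def tprod_Nil)
next
  case (Cons e ts)
  obtain i j where e: "e = (i, j)" by (cases e)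
  have g: "good ts" "i < n" "j < n" "i \<noteq> j" using Cons.prems e by (auto simp: good_Cons)
  have cl: "\<forall>(i, j)\<in>set ts. i \<in> B \<longleftrightarrow> j \<in> B" "i \<in> B \<longleftrightarrow> j \<in> B" using Cons.prems e by auto
  have IH: "2 * nsel B (sel ts s) + cnt (sc s) B = nsel B ts + cnt (sc (tprod ts \<circ> s)) B"
    by (rule Cons.IH[OF g(1) cl(1)])
  let ?p' = "tprod ts \<circ> s"
  let ?p = "transpose i j \<circ> ?p'"
  have p': "?p' permutes {..<n}" by (rule permutes_compose[OF assms(1) tprod_permutes[OF g(1)]])
  have pe: "tprod (e # ts) \<circ> s = ?p" using e by (simp add: tprod_Cons o_assoc)
  have pres': "?p' x \<in> B \<longleftrightarrow> x \<in> B" for x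
    unfolding o_apply by (rule trans[OF tprod_pres[OF cl(1)] assms(4)])
  have tpres: "transpose i j y \<in> B \<longleftrightarrow> y \<in> B" for y using cl(2) by (auto simp: transpose_def)
  have pres: "?p x \<in> B \<longleftrightarrow> x \<in> B" for x
    by (rule trans[OF _ pres'[of x]]) (simp only: o_apply tpres)
  have clp': "x \<in> B \<longleftrightarrow> y \<in> B" if "(x, y) \<in> sc ?p'" for x y by (rule sc_closed[OF pres' that])
  have clp: "x \<in> B \<longleftrightarrow> y \<in> B" if "(x, y) \<in> sc ?p" for x y by (rule sc_closed[OF pres that])
  have Pp': "part (sc ?p')" by (rule part_sc[OF p'])
  have Pp: "part (sc ?p)" by (rule part_sc[OF swap_permutes[OF p' g(2,3)]])
  have c0: "cnt (sc (tprod (e # ts) \<circ> s)) B = cnt (sc ?p) B" by (simp only: pe)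
  show ?case
  proof (cases "(i, j) \<in> sc ?p'")
    case True
    have selc: "sel (e # ts) s = (i, j) # sel ts s" using e True by (simp add: same_cycle_sc)
    have sp: "sc ?p' = join (sc ?p) i j" "(i, j) \<notin> sc ?p" using split[OF p' g(2-4) True] by auto
    show ?thesis
    proof (cases "i \<in> B")
      case iB: True
      have "cnt (join (sc ?p) i j) B + 1 = cnt (sc ?p) B"
        by (rule CL(1)[OF Pp g(2,3) sp(2) clp iB]) (use iB cl(2) in auto)
      hence c1: "cnt (sc ?p') B + 1 = cnt (sc ?p) B" by (simp only: sp(1))
      have s1: "nsel B (sel (e # ts) s) = nsel B (sel ts s) + 1" using iB by (simp only: selc nsel_Cons) simp
      have m1: "nsel B (e # ts) = nsel B ts + 1" using iB by (simp only: e nsel_Cons) simp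
      show ?thesis using IH c0 c1 s1 m1 by linarith
    next
      case iB: False
      have "cnt (join (sc ?p) i j) B = cnt (sc ?p) B"
        by (rule CL(2)[OF Pp g(2,3) sp(2) clp iB]) (use iB cl(2) in auto)
      hence c1: "cnt (sc ?p') B = cnt (sc ?p) B" by (simp only: sp(1))
      have s1: "nsel B (sel (e # ts) s) = nsel B (sel ts s)" using iB by (simp only: selc nsel_Cons) simp
      have m1: "nsel B (e # ts) = nsel B ts" using iB by (simp only: e nsel_Cons) simp
      show ?thesis using IH c0 c1 s1 m1 by linarith
    qed
  next
    case False
    have selc: "sel (e # ts) s = sel ts s" using e False by (simp add: same_cycle_sc)
    have mg: "sc ?p = join (sc ?p') i j" by (rule merge[OF p' g(2-4) False])
    show ?thesis
    proof (cases "i \<in> B")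
      case iB: True
      have "cnt (join (sc ?p') i j) B + 1 = cnt (sc ?p') B"
        by (rule CL(1)[OF Pp' g(2,3) False clp' iB]) (use iB cl(2) in auto)
      hence c1: "cnt (sc ?p) B + 1 = cnt (sc ?p') B" by (simp only: mg)
      have s1: "nsel B (sel (e # ts) s) = nsel B (sel ts s)" by (simp only: selc)
      have m1: "nsel B (e # ts) = nsel B ts + 1" using iB by (simp only: e nsel_Cons) simp
      show ?thesis using IH c0 c1 s1 m1 by linarith
    next
      case iB: False
      have "cnt (join (sc ?p') i j) B = cnt (sc ?p') B"
        by (rule CL(2)[OF Pp' g(2,3) False clp' iB]) (use iB cl(2) in auto)
      hence c1: "cnt (sc ?p) B = cnt (sc ?p') B" by (simp only: mg)
      have s1: "nsel B (sel (e # ts) s) = nsel B (sel ts s)" by (simp only: selc)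
      have m1: "nsel B (e # ts) = nsel B ts" using iB by (simp only: e nsel_Cons) simp
      show ?thesis using IH c0 c1 s1 m1 by linarith
    qed
  qed
qed

lemma r_sub_Qr: "part r \<Longrightarrow> good E \<Longrightarrow> r \<subseteq> Qr r E"
  by (simp add: Qr_char) (auto)

lemma cnt_self: assumes "part r" "x < n" shows "cnt r (r `` {x}) = 1"
proof -
  have "{Ob \<in> blocks r. Ob \<subseteq> r `` {x}} = {r `` {x}}"
  proof
    show "{Ob \<in> blocks r. Ob \<subseteq> r `` {x}} \<subseteq> {r `` {x}}"
    proof
      fix Ob assume Ob: "Ob \<in> {Ob \<in> blocks r. Ob \<subseteq> r `` {x}}"
      then obtain y where y: "y \<in> Ob" using block_ne[OF assms(1)] by blast
      have "Ob = r `` {y}" using block_uniq[OF assms(1)] Ob y by blast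
      moreover have "(x, y) \<in> r" using Ob y by auto
      ultimately show "Ob \<in> {r `` {x}}" using part_cls_eq[OF assms(1)] by auto
    qed
    show "{r `` {x}} \<subseteq> {Ob \<in> blocks r. Ob \<subseteq> r `` {x}}" using block_of[OF assms] by auto
  qed
  thus ?thesis by (simp add: cnt_def)
qed

lemma cnt_union: assumes "part r" "part Q" "r \<subseteq> Q" "B1 \<in> blocks Q" "B2 \<in> blocks Q" "B1 \<noteq> B2"
  shows "cnt r (B1 \<union> B2) = cnt r B1 + cnt r B2"
proof -
  have disj: "B1 \<inter> B2 = {}" by (rule blocks_disj[OF assms(2,4,5,6)])
  have eq: "{Ob \<in> blocks r. Ob \<subseteq> B1 \<union> B2} = {Ob \<in> blocks r. Ob \<subseteq> B1} \<union> {Ob \<in> blocks r. Ob \<subseteq> B2}"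
  proof
    show "{Ob \<in> blocks r. Ob \<subseteq> B1 \<union> B2} \<subseteq> {Ob \<in> blocks r. Ob \<subseteq> B1} \<union> {Ob \<in> blocks r. Ob \<subseteq> B2}"
    proof
      fix Ob assume Ob: "Ob \<in> {Ob \<in> blocks r. Ob \<subseteq> B1 \<union> B2}"
      then obtain y where y: "y \<in> Ob" using block_ne[OF assms(1)] by blast
      have Oby: "Ob = r `` {y}" using block_uniq[OF assms(1)] Ob y by blast
      have sub: "Ob \<subseteq> Q `` {y}" using Oby assms(3) by auto
      have "y \<in> B1 \<or> y \<in> B2" using Ob y by auto
      thus "Ob \<in> {Ob \<in> blocks r. Ob \<subseteq> B1} \<union> {Ob \<in> blocks r. Ob \<subseteq> B2}"
        using block_uniq[OF assms(2) assms(4)] block_uniq[OF assms(2) assms(5)] sub Ob by auto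
    qed
  qed auto
  have d2: "{Ob \<in> blocks r. Ob \<subseteq> B1} \<inter> {Ob \<in> blocks r. Ob \<subseteq> B2} = {}"
  proof (rule ccontr)
    assume "{Ob \<in> blocks r. Ob \<subseteq> B1} \<inter> {Ob \<in> blocks r. Ob \<subseteq> B2} \<noteq> {}"
    then obtain Ob where "Ob \<in> blocks r" "Ob \<subseteq> B1" "Ob \<subseteq> B2" by auto
    moreover obtain y where "y \<in> Ob" using block_ne[OF assms(1) calculation(1)] by blast
    ultimately show False using disj by blast
  qed
  show ?thesis unfolding cnt_def eq by (rule card_Un_disjoint) (use blocks_finite d2 in auto)
qed

lemma HC: assumes "part r" "good E" "x < n"
  shows "hcx r E x + cnt r (Qr r E `` {x}) = nsel (Qr r E `` {x}) E + 1"
  using assms(2,3)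
proof (induction E arbitrary: x)
  case Nil thus ?case using cnt_self[OF assms(1)] by (simp add: nsel_def)
next
  case (Cons e E)
  obtain i j where e: "e = (i, j)" by (cases e)
  have g: "good E" "i < n" "j < n" "i \<noteq> j" using Cons.prems e by (auto simp: good_Cons)
  let ?Q = "Qr r E"
  have P: "part ?Q" by (rule Qr_part[OF assms(1) g(1)])
  have rQ: "r \<subseteq> ?Q" by (rule r_sub_Qr[OF assms(1) g(1)])
  have Qe: "Qr r (e # E) = join ?Q i j" using e by simp
  show ?case
  proof (cases "(x, i) \<in> ?Q \<or> (x, j) \<in> ?Q")
    case True
    show ?thesis
    proof (cases "(i, j) \<in> ?Q")
      case ij: True
      have QQ: "Qr r (e # E) = ?Q" using Qe join_same[OF P ij] by simp
      have xi: "(x, i) \<in> ?Q" using True ij part_trans[OF P _ part_sym[OF P ij]] by blast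
      have cls: "?Q `` {x} = ?Q `` {i}" by (rule part_cls_eq[OF P xi])
      have h: "hcx r (e # E) x = hcx r E i + 1" using e True ij by simp
      have iin: "i \<in> ?Q `` {i}" using part_refl[OF P] by simp
      show ?thesis using Cons.IH[OF g(1) g(2)] h QQ cls e iin by (simp add: nsel_Cons)
    next
      case ij: False
      have cls: "Qr r (e # E) `` {x} = ?Q `` {i} \<union> ?Q `` {j}" using Qe cls_join[OF P ij] True by simp
      have h: "hcx r (e # E) x = hcx r E i + hcx r E j" using e True ij by simp
      have Bi: "?Q `` {i} \<in> blocks ?Q" "?Q `` {j} \<in> blocks ?Q" using block_of[OF P] g(2,3) by auto
      have ne: "?Q `` {i} \<noteq> ?Q `` {j}" using ij part_refl[OF P, of j] by auto
      have disj: "?Q `` {i} \<inter> ?Q `` {j} = {}" by (rule blocks_disj[OF P Bi ne])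
      have c: "cnt r (?Q `` {i} \<union> ?Q `` {j}) = cnt r (?Q `` {i}) + cnt r (?Q `` {j})"
        by (rule cnt_union[OF assms(1) P rQ Bi ne])
      have nn: "nsel (?Q `` {i} \<union> ?Q `` {j}) E = nsel (?Q `` {i}) E + nsel (?Q `` {j}) E"
        by (rule nsel_union[OF disj])
      have iin: "i \<in> ?Q `` {i}" using part_refl[OF P] by simp
      show ?thesis using Cons.IH[OF g(1) g(2)] Cons.IH[OF g(1) g(3)] h cls c nn e iin
        by (simp add: nsel_Cons)
    qed
  next
    case False
    have ij_cases: "(x, i) \<notin> ?Q" "(x, j) \<notin> ?Q" using False by auto
    have cls: "Qr r (e # E) `` {x} = ?Q `` {x}"
    proof (cases "(i, j) \<in> ?Q")
      case True thus ?thesis using Qe join_same[OF P True] by simp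
    next
      case ij: False thus ?thesis using Qe cls_join[OF P ij] False by simp
    qed
    have h: "hcx r (e # E) x = hcx r E x" using e False by simp
    have "i \<notin> ?Q `` {x}" using ij_cases by simp
    thus ?thesis using Cons.IH[OF g(1) Cons.prems(2)] h cls e by (simp add: nsel_Cons)
  qed
qed

end

lemma tprod_append: "tprod (a @ b) = tprod a \<circ> tprod b"
  by (induction a) (auto simp: tprod_def)

lemma tprod_cycle: "tprod (zip cl (tl cl)) = cycle_of_list cl"
  by (induction cl rule: cycle_of_list.induct) (auto simp: tprod_def)

lemma cycle_nth: assumes "distinct cl" "k < length cl"
  shows "cycle_of_list cl (cl ! k) = cl ! ((k + 1) mod length cl)"
proof -
  have "map (cycle_of_list cl) cl = rotate1 cl"
    using cyclic_rotation[OF assms(1), of 1] by simp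
  hence "cycle_of_list cl (cl ! k) = rotate1 cl ! k" using assms(2) by (metis nth_map)
  thus ?thesis using assms(2) by (simp add: nth_rotate1)
qed

lemma cycle_on: assumes "distinct cl" "\<forall>k<length cl. r (cl ! k) = cl ! ((k + 1) mod length cl)" "x \<in> set cl"
  shows "cycle_of_list cl x = r x" "r x \<in> set cl"
proof -
  obtain k where k: "k < length cl" "x = cl ! k" using assms(3) by (metis in_set_conv_nth)
  show "cycle_of_list cl x = r x" using cycle_nth[OF assms(1) k(1)] assms(2) k by simp
  have "length cl > 0" using k(1) by linarith
  hence "(k + 1) mod length cl < length cl" by (rule mod_less_divisor)
  thus "r x \<in> set cl" using assms(2) k by simp
qed

lemma transp_list_Cons: "transp_list (cl # cs) = zip cl (tl cl) @ transp_list cs"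
  by (simp add: transp_list_def)

lemma tprod_decomp: assumes "distinct (concat cs)"
    "\<forall>cl\<in>set cs. cl \<noteq> [] \<and> (\<forall>k<length cl. r (cl ! k) = cl ! ((k + 1) mod length cl))"
  shows "tprod (transp_list cs) x = (if x \<in> set (concat cs) then r x else x)"
  using assms
proof (induction cs arbitrary: x)
  case Nil thus ?case by (simp add: transp_list_def tprod_def)
next
  case (Cons cl cs)
  have d: "distinct cl" "distinct (concat cs)" "set cl \<inter> set (concat cs) = {}" using Cons.prems(1) by auto
  have cl: "\<forall>k<length cl. r (cl ! k) = cl ! ((k + 1) mod length cl)" using Cons.prems(2) by auto
  have IH: "tprod (transp_list cs) y = (if y \<in> set (concat cs) then r y else y)" for y
    using Cons.IH[OF d(2)] Cons.prems(2) by auto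
  have rin: "r y \<in> set (concat cs)" if yin: "y \<in> set (concat cs)" for y
  proof -
    obtain cl' where "cl' \<in> set cs" "y \<in> set cl'" using yin unfolding set_concat by blast
    moreover have "distinct cl'" using d(2) calculation(1) by (metis distinct_concat_iff)
    ultimately show ?thesis using cycle_on(2)[of cl' r y] Cons.prems(2) by auto
  qed
  have T: "tprod (transp_list (cl # cs)) y = cycle_of_list cl (tprod (transp_list cs) y)" for y
    by (simp add: transp_list_Cons tprod_append tprod_cycle)
  show ?case
  proof (cases "x \<in> set cl")
    case True
    hence "x \<notin> set (concat cs)" using d(3) by auto
    thus ?thesis using T IH True cycle_on(1)[OF d(1) cl True] by simp
  next
    case False
    show ?thesis
    proof (cases "x \<in> set (concat cs)")
      case True
      have "r x \<notin> set cl" using rin[OF True] d(3) by auto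
      thus ?thesis using T IH True id_outside_supp by simp
    next
      case False2: False
      thus ?thesis using T IH False id_outside_supp by simp
    qed
  qed
qed

context FRn begin

lemma cd_tprod: assumes "r permutes {..<n}" "cycle_decomp n r cs" shows "tprod (transp_list cs) = r"
proof
  fix x
  have "tprod (transp_list cs) x = (if x \<in> set (concat cs) then r x else x)"
    by (rule tprod_decomp) (use assms(2) in \<open>auto simp: cycle_decomp_def\<close>)
  moreover have "r x = x" if "x \<notin> set (concat cs)"
  proof (cases "x < n")
    case True thus ?thesis using that assms(2) unfolding cycle_decomp_def by auto
  next
    case False thus ?thesis using permutes_not_in[OF assms(1)] by auto
  qed
  ultimately show "tprod (transp_list cs) x = r x" by auto
qed

fun fresh :: "(nat \<times> nat) list \<Rightarrow> bool" where
  "fresh [] = True"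
| "fresh ((a, b) # ts) = (a \<notin> fst ` set ts \<and> a \<notin> snd ` set ts \<and> a \<noteq> b \<and> fresh ts)"

definition elems :: "(nat \<times> nat) list \<Rightarrow> nat set" where
  "elems ts = fst ` set ts \<union> snd ` set ts"

lemma fresh_append: "fresh A \<Longrightarrow> fresh B \<Longrightarrow> elems A \<inter> elems B = {} \<Longrightarrow> fresh (A @ B)"
  by (induction A rule: fresh.induct) (auto simp: elems_def)

lemma zip_elems: "elems (zip cl (tl cl)) \<subseteq> set cl"
  by (induction cl rule: cycle_of_list.induct) (auto simp: elems_def)

lemma fresh_zip: "distinct cl \<Longrightarrow> fresh (zip cl (tl cl))"
proof (induction cl rule: cycle_of_list.induct)
  case (1 i j cs)
  have "elems (zip (j # cs) cs) \<subseteq> set (j # cs)" using zip_elems[of "j # cs"] by simp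
  hence "i \<notin> fst ` set (zip (j # cs) cs)" "i \<notin> snd ` set (zip (j # cs) cs)"
    using "1.prems" by (auto simp: elems_def)
  thus ?case using 1 by simp
qed auto

lemma elems_transp: "elems (transp_list cs) \<subseteq> set (concat cs)"
proof (induction cs)
  case Nil thus ?case by (simp add: transp_list_def elems_def)
next
  case (Cons cl cs)
  have "elems (transp_list (cl # cs)) = elems (zip cl (tl cl)) \<union> elems (transp_list cs)"
    by (simp add: transp_list_Cons elems_def image_Un Un_ac)
  thus ?case using zip_elems[of cl] Cons by auto
qed

lemma fresh_transp: "distinct (concat cs) \<Longrightarrow> fresh (transp_list cs)"
proof (induction cs)
  case Nil thus ?case by (simp add: transp_list_def)
next
  case (Cons cl cs)
  have d: "distinct cl" "distinct (concat cs)" "set cl \<inter> set (concat cs) = {}" using Cons.prems by auto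
  show ?case unfolding transp_list_Cons
  proof (rule fresh_append)
    show "fresh (zip cl (tl cl))" by (rule fresh_zip[OF d(1)])
    show "fresh (transp_list cs)" by (rule Cons.IH[OF d(2)])
    show "elems (zip cl (tl cl)) \<inter> elems (transp_list cs) = {}"
      using zip_elems[of cl] elems_transp[of cs] d(3) by auto
  qed
qed

lemma tprod_fix: "a \<notin> elems ts \<Longrightarrow> tprod ts a = a"
proof (induction ts)
  case Nil thus ?case by (simp add: tprod_Nil)
next
  case (Cons e ts)
  obtain i j where e: "e = (i, j)" by (cases e)
  have "a \<notin> elems ts" "a \<noteq> i" "a \<noteq> j" using Cons.prems e by (auto simp: elems_def)
  thus ?case using Cons.IH e by (simp add: tprod_Cons)
qed

lemma sel_fresh_id: "fresh ts \<Longrightarrow> sel ts id = []"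
proof (induction ts)
  case Nil thus ?case by simp
next
  case (Cons e ts)
  obtain a b where e: "e = (a, b)" by (cases e)
  have f: "a \<notin> elems ts" "a \<noteq> b" "fresh ts" using Cons.prems e by (auto simp: elems_def)
  have fx: "tprod ts a = a" by (rule tprod_fix[OF f(1)])
  have "((tprod ts \<circ> id) ^^ k) a = a" for k by (induction k) (simp_all add: fx)
  hence nsc: "\<not> same_cycle (tprod ts \<circ> id) a b" using f(2) by (simp add: same_cycle_def)
  have "sel (e # ts) id = sel ts id" by (simp only: e sel.simps nsc if_False)
  thus ?case using Cons.IH[OF f(3)] by (simp only:)
qed

lemma cd_moved: assumes "r permutes {..<n}" "cycle_decomp n r cs" "cl \<in> set cs" "x \<in> set cl" "length cl \<ge> 2"
  shows "x < n"
proof -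
  have d: "distinct cl" using assms(2,3) unfolding cycle_decomp_def by (metis distinct_concat_iff)
  obtain k where k: "k < length cl" "x = cl ! k" using assms(4) by (metis in_set_conv_nth)
  have rx: "r x = cl ! ((k + 1) mod length cl)" using assms(2,3) k unfolding cycle_decomp_def by auto
  have "(k + 1) mod length cl \<noteq> k"
  proof (cases "k + 1 < length cl")
    case True thus ?thesis by simp
  next
    case False
    hence "k + 1 = length cl" using k(1) by simp
    thus ?thesis using assms(5) by simp
  qed
  moreover have "(k + 1) mod length cl < length cl"
  proof -
    have "length cl > 0" using k(1) by linarith
    thus ?thesis by (rule mod_less_divisor)
  qed
  ultimately have "cl ! ((k + 1) mod length cl) \<noteq> cl ! k" using k(1) d by (simp add: nth_eq_iff_index_eq)
  hence "r x \<noteq> x" using rx k by simp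
  thus ?thesis using permutes_not_in[OF assms(1)] by auto
qed

lemma zip_pairs: "(a, b) \<in> set (zip cl (tl cl)) \<Longrightarrow> a \<in> set cl \<and> b \<in> set cl \<and> length cl \<ge> 2"
  by (induction cl rule: cycle_of_list.induct) auto

lemma zip_step: "distinct cl \<Longrightarrow> (a, b) \<in> set (zip cl (tl cl)) \<Longrightarrow> \<exists>k. k + 1 < length cl \<and> a = cl ! k \<and> b = cl ! (k + 1)"
proof (induction cl rule: cycle_of_list.induct)
  case (1 i j cs)
  show ?case
  proof (cases "(a, b) = (i, j)")
    case True thus ?thesis by (intro exI[of _ 0]) auto
  next
    case False
    hence "(a, b) \<in> set (zip (j # cs) cs)" using "1.prems" by auto
    then obtain k where "k + 1 < length (j # cs)" "a = (j # cs) ! k" "b = (j # cs) ! (k + 1)"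
      using 1 by auto
    thus ?thesis by (intro exI[of _ "Suc k"]) auto
  qed
qed auto

lemma cd_good: assumes "r permutes {..<n}" "cycle_decomp n r cs" shows "good (transp_list cs)"
  unfolding good_def
proof (intro ballI, clarify)
  fix a b assume ab: "(a, b) \<in> set (transp_list cs)"
  then obtain cl where cl: "cl \<in> set cs" "(a, b) \<in> set (zip cl (tl cl))" by (auto simp: transp_list_def)
  have zp: "a \<in> set cl" "b \<in> set cl" "length cl \<ge> 2" using zip_pairs[OF cl(2)] by auto
  have d: "distinct cl" using assms(2) cl(1) unfolding cycle_decomp_def by (metis distinct_concat_iff)
  obtain k where "k + 1 < length cl" "a = cl ! k" "b = cl ! (k + 1)" using zip_step[OF d cl(2)] by blast
  hence "a \<noteq> b" using d by (simp add: nth_eq_iff_index_eq)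
  thus "a < n \<and> b < n \<and> a \<noteq> b" using cd_moved[OF assms cl(1)] zp by auto
qed

lemma cd_fresh: "cycle_decomp n r cs \<Longrightarrow> fresh (transp_list cs)"
  by (rule fresh_transp) (simp add: cycle_decomp_def)

lemma sc_id: "sc id = Id" by (auto simp: sc_def)

lemma cd_sc: assumes "r permutes {..<n}" "cycle_decomp n r cs"
  shows "sc r = (edg (transp_list cs))\<^sup>*"
proof -
  let ?T = "transp_list cs"
  have "(sc (tprod ?T \<circ> id) \<union> edg (sel ?T id))\<^sup>* = (sc id \<union> edg ?T)\<^sup>*"
    by (rule PI[OF permutes_id cd_good[OF assms]])
  moreover have "sel ?T id = []" by (rule sel_fresh_id[OF cd_fresh[OF assms(2)]])
  moreover have "tprod ?T \<circ> id = r" using cd_tprod[OF assms] by simp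
  ultimately have "(sc r)\<^sup>* = (Id \<union> edg ?T)\<^sup>*" by (simp add: edg_def sc_id)
  also have "\<dots> = (edg ?T)\<^sup>*" by (rule rtrancl_subset) auto
  finally show ?thesis using part_rt[OF part_sc[OF assms(1)]] by simp
qed

lemma cnt_id: assumes "B \<subseteq> {..<n}" shows "cnt (sc id) B = card B"
proof -
  have "{Ob \<in> blocks (sc id). Ob \<subseteq> B} = (\<lambda>x. {x}) ` B"
    using assms by (auto simp: blocks_def sc_id)
  thus ?thesis unfolding cnt_def by (simp add: card_image)
qed

lemma cd_count: assumes "r permutes {..<n}" "cycle_decomp n r cs" "B \<subseteq> {..<n}"
    "\<forall>(i, j)\<in>set (transp_list cs). i \<in> B \<longleftrightarrow> j \<in> B"
  shows "nsel B (transp_list cs) + cnt (sc r) B = card B"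
proof -
  let ?T = "transp_list cs"
  have "2 * nsel B (sel ?T id) + cnt (sc id) B = nsel B ?T + cnt (sc (tprod ?T \<circ> id)) B"
    by (rule PC[OF permutes_id cd_good[OF assms(1,2)] assms(4)]) simp
  thus ?thesis using sel_fresh_id[OF cd_fresh[OF assms(2)]] cd_tprod[OF assms(1,2)] cnt_id[OF assms(3)]
    by (simp add: nsel_def)
qed

end

context FRn begin

lemma mulR_unit: assumes "p permutes {..<n}" "\<And>c. c \<notin> fixvecs one n p \<Longrightarrow> r c = 0"
  shows "mulR one N n p r (basis (unitvec one)) = r"
proof
  fix c
  show "mulR one N n p r (basis (unitvec one)) c = r c"
  proof (cases "c \<in> fixvecs one n p")
    case False thus ?thesis using assms(2) by (simp add: mulR_def)
  next
    case True
    have P: "part (sc p)" by (rule part_sc[OF assms(1)])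
    have uf: "unitvec one \<in> fixvecs one n p" by (simp add: fixvecs_def unit_in_V, simp add: unitvec_def)
    have key: "(\<Prod>Ob\<in>orbits n p. int (N (a (Min Ob)) one (c (Min Ob)))) = (if a = c then 1 else 0)"
      if a: "a \<in> fixvecs one n p" for a
    proof (cases "a = c")
      case True thus ?thesis by (simp add: Ncomm[of _ one] None)
    next
      case False
      then obtain k where k: "a k \<noteq> c k" by auto
      have kn: "k < n" using k a True by (auto simp: fixvecs_def in_V) (metis not_less)
      let ?Ob = "sc p `` {k}"
      have Ob: "?Ob \<in> orbits n p" "k \<in> ?Ob" using block_of[OF P kn] by (auto simp: orbits_blocks)
      have m: "Min ?Ob \<in> ?Ob" using Min_in[OF block_finite[OF P] block_ne[OF P]] Ob by (auto simp: orbits_blocks)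
      have "a (Min ?Ob) = a k" by (rule fix_const[OF assms(1) a]) (use m kn in auto)
      moreover have "c (Min ?Ob) = c k" by (rule fix_const[OF assms(1) True]) (use m kn in auto)
      ultimately have "int (N (a (Min ?Ob)) one (c (Min ?Ob))) = 0" using k by (simp add: Ncomm[of _ one] None)
      hence "(\<Prod>Ob\<in>orbits n p. int (N (a (Min Ob)) one (c (Min Ob)))) = 0"
        using Ob(1) by (intro prod_zero) (auto simp: orbits_def)
      thus ?thesis using False by simp
    qed
    have "mulR one N n p r (basis (unitvec one)) c =
      (\<Sum>a\<in>fixvecs one n p. \<Sum>b\<in>fixvecs one n p. r a * basis (unitvec one) b *
          (\<Prod>Ob\<in>orbits n p. int (N (a (Min Ob)) (b (Min Ob)) (c (Min Ob)))))"
      using True by (simp add: mulR_def)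
    also have "\<dots> = (\<Sum>a\<in>fixvecs one n p. r a * (\<Prod>Ob\<in>orbits n p. int (N (a (Min Ob)) one (c (Min Ob)))))"
    proof (rule sum.cong[OF refl])
      fix a
      have fin: "finite (fixvecs one n p)" using finite_V by (rule finite_subset[rotated]) (auto simp: fixvecs_def)
      show "(\<Sum>b\<in>fixvecs one n p. r a * basis (unitvec one) b * (\<Prod>Ob\<in>orbits n p. int (N (a (Min Ob)) (b (Min Ob)) (c (Min Ob))))) =
        r a * (\<Prod>Ob\<in>orbits n p. int (N (a (Min Ob)) one (c (Min Ob))))"
        using uf fin by (simp add: basis_def if_distrib[of "\<lambda>t. r a * t * _"] sum.delta' cong: if_cong)
          (simp add: unitvec_def)
    qed
    also have "\<dots> = (\<Sum>a\<in>fixvecs one n p. if a = c then r a else 0)"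
      by (rule sum.cong[OF refl]) (simp add: key)
    also have "\<dots> = r c"
    proof -
      have fin: "finite (fixvecs one n p)" using finite_V by (rule finite_subset[rotated]) (auto simp: fixvecs_def)
      thus ?thesis using True by (simp add: sum.delta')
    qed
    finally show ?thesis .
  qed
qed

lemma conf_zero: "c \<notin> fixvecs one n p \<Longrightarrow> conf one N n p x c = 0" by (simp add: conf_def)

lemma ad_unit: "p permutes {..<n} \<Longrightarrow> ad_fuse one N n p x (basis (unitvec one)) = conf one N n p x"
  unfolding ad_fuse_def by (rule mulR_unit) (auto simp: conf_zero)

lemma deconf: assumes "p permutes {..<n}" "is_deconf one N n p b d"
  shows "conf one N n p d = basis b" "supp d"
  using assms ad_unit[OF assms(1)] by (auto simp: is_deconf_def supp_def)

end

context FRn begin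

lemma conj_funpow: assumes "r permutes {..<n}"
  shows "((r \<circ> s \<circ> inv r) ^^ k) = r \<circ> (s ^^ k) \<circ> inv r"
proof (induction k)
  case 0 thus ?case using permutes_inv_o(1)[OF assms] by simp
next
  case (Suc k)
  have "((r \<circ> s \<circ> inv r) ^^ Suc k) = (r \<circ> s \<circ> inv r) \<circ> ((r \<circ> s \<circ> inv r) ^^ k)" by (rule funpow.simps(2))
  also have "\<dots> = (r \<circ> s \<circ> inv r) \<circ> (r \<circ> (s ^^ k) \<circ> inv r)" by (simp only: Suc)
  also have "\<dots> = r \<circ> s \<circ> (inv r \<circ> r) \<circ> (s ^^ k) \<circ> inv r" by (simp add: o_assoc)
  also have "\<dots> = r \<circ> (s ^^ Suc k) \<circ> inv r" using permutes_inv_o(2)[OF assms] by (simp add: o_assoc funpow_Suc_right[symmetric])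
  finally show ?case .
qed

lemma sc_conj: assumes "r permutes {..<n}"
  shows "(r x, r y) \<in> sc (r \<circ> s \<circ> inv r) \<longleftrightarrow> (x, y) \<in> sc s"
proof -
  have ir: "inv r (r z) = z" for z using permutes_inverses(2)[OF assms] .
  have inj: "inj r" using permutes_inj[OF assms] .
  have "((r \<circ> s \<circ> inv r) ^^ k) (r x) = r ((s ^^ k) x)" for k by (simp add: conj_funpow[OF assms] ir)
  thus ?thesis unfolding sc_def using inj by (auto simp: inj_eq)
qed

lemma blocks_conj: assumes "r permutes {..<n}" "s permutes {..<n}"
  shows "blocks (sc (r \<circ> s \<circ> inv r)) = (\<lambda>Ob. r ` Ob) ` blocks (sc s)"
proof -
  let ?c = "r \<circ> s \<circ> inv r"
  have ir: "r (inv r z) = z" for z using permutes_inverses(1)[OF assms(1)] .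
  have cls: "sc ?c `` {r x} = r ` (sc s `` {x})" for x
  proof
    show "sc ?c `` {r x} \<subseteq> r ` (sc s `` {x})"
    proof
      fix y assume "y \<in> sc ?c `` {r x}"
      hence "(r x, r (inv r y)) \<in> sc ?c" using ir by simp
      hence "(x, inv r y) \<in> sc s" using sc_conj[OF assms(1)] by blast
      thus "y \<in> r ` (sc s `` {x})" using ir by (metis ImageI imageI singletonI)
    qed
    show "r ` (sc s `` {x}) \<subseteq> sc ?c `` {r x}" using sc_conj[OF assms(1)] by auto
  qed
  have img: "r ` {..<n} = {..<n}" by (rule permutes_image[OF assms(1)])
  have "blocks (sc ?c) = (\<lambda>y. sc ?c `` {y}) ` (r ` {..<n})" unfolding blocks_def img ..
  also have "\<dots> = (\<lambda>x. r ` (sc s `` {x})) ` {..<n}" by (simp add: image_image cls)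
  also have "\<dots> = (\<lambda>Ob. r ` Ob) ` blocks (sc s)" by (simp add: blocks_def image_image)
  finally show ?thesis .
qed

lemma cnt_conj: assumes "r permutes {..<n}" "s permutes {..<n}" "\<And>x. r x \<in> B \<longleftrightarrow> x \<in> B"
  shows "cnt (sc (r \<circ> s \<circ> inv r)) B = cnt (sc s) B"
proof -
  have inj: "inj r" using permutes_inj[OF assms(1)] .
  have sub: "r ` Ob \<subseteq> B \<longleftrightarrow> Ob \<subseteq> B" for Ob using assms(3) by auto
  have "{Ob \<in> blocks (sc (r \<circ> s \<circ> inv r)). Ob \<subseteq> B} = (\<lambda>Ob. r ` Ob) ` {Ob \<in> blocks (sc s). Ob \<subseteq> B}"
    unfolding blocks_conj[OF assms(1,2)] using sub by auto
  moreover have "inj_on (\<lambda>Ob. r ` Ob) {Ob \<in> blocks (sc s). Ob \<subseteq> B}"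
    using inj by (auto simp: inj_on_def inj_image_eq_iff)
  ultimately show ?thesis unfolding cnt_def by (simp add: card_image)
qed

lemma act_fix: assumes "r permutes {..<n}" "s permutes {..<n}" "b \<in> fixvecs one n s"
  shows "act_vec r b \<in> fixvecs one n (r \<circ> s \<circ> inv r)"
proof -
  have ri: "inv r permutes {..<n}" by (rule permutes_inv[OF assms(1)])
  have ir: "inv r (r z) = z" for z using permutes_inverses(2)[OF assms(1)] .
  have V: "act_vec r b \<in> V"
    using assms(3) permutes_not_in[OF ri] by (auto simp: act_vec_def fixvecs_def in_V)
  have "act_vec r b ((r \<circ> s \<circ> inv r) i) = act_vec r b i" if "i < n" for i
  proof -
    have "inv r i < n" using permutes_in_image[OF ri] that by auto
    thus ?thesis using assms(3) by (simp add: act_vec_def ir fixvecs_def)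
  qed
  thus ?thesis using V by (simp add: fixvecs_def)
qed

end

context FRn begin

lemma main:
  fixes r s :: "nat \<Rightarrow> nat"
  assumes pr: "r permutes {..<n}" and ps: "s permutes {..<n}"
    and a: "a \<in> fixvecs one n r" and b: "b \<in> fixvecs one n s"
    and d1: "is_deconf one N n r a d1" and d2: "is_deconf one N n s b d2"
    and d3: "is_deconf one N n (r \<circ> s \<circ> inv r) (act_vec r b) d3"
    and d4: "is_deconf one N n r a d4"
    and cs1: "cycle_decomp n r cs1" and cs2: "cycle_decomp n (r \<circ> s \<circ> inv r) cs2"
  shows "defect_prod one dual N n r s d1 d2 cs1 = defect_prod one dual N n (r \<circ> s \<circ> inv r) r d3 d4 cs2"
proof -
  let ?c = "r \<circ> s \<circ> inv r"
  let ?p = "r \<circ> s"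
  have pri: "inv r permutes {..<n}" by (rule permutes_inv[OF pr])
  have pc: "?c permutes {..<n}" by (rule permutes_compose[OF pri permutes_compose[OF ps pr]])
  have pp: "?p permutes {..<n}" by (rule permutes_compose[OF ps pr])
  have ir: "inv r (r z) = z" for z using permutes_inverses(2)[OF pr] .
  have cr: "?c \<circ> r = ?p" by (simp add: fun_eq_iff ir)
  have ri: "r (inv r z) = z" for z using permutes_inverses(1)[OF pr] .
  define T1 where "T1 = transp_list cs1"
  define T2 where "T2 = transp_list cs2"
  define E1 where "E1 = sel T1 s"
  define E2 where "E2 = sel T2 r"
  have gT1: "good T1" unfolding T1_def by (rule cd_good[OF pr cs1])
  have gT2: "good T2" unfolding T2_def by (rule cd_good[OF pc cs2])
  have tT1: "tprod T1 = r" unfolding T1_def by (rule cd_tprod[OF pr cs1])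
  have tT2: "tprod T2 = ?c" unfolding T2_def by (rule cd_tprod[OF pc cs2])
  have gE1: "good E1" unfolding E1_def by (rule good_sub[OF gT1 sel_sub])
  have gE2: "good E2" unfolding E2_def by (rule good_sub[OF gT2 sel_sub])
  have P: "part (sc ?p)" by (rule part_sc[OF pp])
  define R where "R = (sc s \<union> sc r)\<^sup>*"
  have scs_sym: "(x, y) \<in> sc s \<Longrightarrow> (y, x) \<in> sc s" for x y by (rule part_sym[OF part_sc[OF ps]])
  have scr_sym: "(x, y) \<in> sc r \<Longrightarrow> (y, x) \<in> sc r" for x y by (rule part_sym[OF part_sc[OF pr]])
  have PR: "part R" unfolding part_def
  proof (intro conjI allI impI)
    show "equiv UNIV R"
    proof (rule equivI)
      show "R \<subseteq> UNIV \<times> UNIV" by simp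
      show "refl R" unfolding R_def refl_on_def by auto
      show "sym R" unfolding R_def
        by (rule sym_rtrancl) (auto simp: sym_def intro: scs_sym scr_sym)
      show "trans R" unfolding R_def by (rule trans_rtrancl)
    qed
    fix x y assume "(x, y) \<in> R"
    thus "(x < n) = (y < n)" unfolding R_def
    proof (induction rule: rtrancl_induct)
      case base thus ?case by simp
    next
      case (step y z)
      have "(y < n) = (z < n)" using step.hyps(2) sc_lt[OF ps] sc_lt[OF pr] by blast
      thus ?case using step.IH by simp
    qed
  qed
  have sR: "sc s \<subseteq> R" and rR: "sc r \<subseteq> R" unfolding R_def by auto
  have cR: "sc ?c \<subseteq> R"
  proof
    fix z assume "z \<in> sc ?c"
    then obtain x y where xy: "z = (x, y)" "(x, y) \<in> sc ?c" by (cases z) auto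
    have "(r (inv r x), r (inv r y)) \<in> sc ?c" using xy ri by simp
    hence "(inv r x, inv r y) \<in> sc s" using sc_conj[OF pr] by blast
    moreover have "(x, inv r x) \<in> sc r" using scr_sym[OF sc_step[of "inv r x" r]] ri by simp
    moreover have "(inv r y, y) \<in> sc r" using sc_step[of "inv r y" r] ri by simp
    ultimately have "(x, y) \<in> R" using sR rR part_trans[OF PR] by (meson subsetD)
    thus "z \<in> R" using xy by simp
  qed
  have Q1: "Qr (sc ?p) E1 = R"
  proof -
    have "Qr (sc ?p) E1 = (sc (tprod T1 \<circ> s) \<union> edg (sel T1 s))\<^sup>*"
      using Qr_char[OF P gE1] tT1 by (simp add: E1_def)
    also have "\<dots> = (sc s \<union> edg T1)\<^sup>*" by (rule PI[OF ps gT1])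
    also have "\<dots> = (sc s \<union> (edg T1)\<^sup>*)\<^sup>*" using rt_Un1[of "edg T1" "sc s"] by (simp add: Un_commute)
    also have "\<dots> = R" unfolding R_def using cd_sc[OF pr cs1] by (simp add: T1_def)
    finally show ?thesis .
  qed
  have Q2: "Qr (sc ?p) E2 = R"
  proof -
    have "Qr (sc ?p) E2 = (sc (tprod T2 \<circ> r) \<union> edg (sel T2 r))\<^sup>*"
      using Qr_char[OF P gE2] tT2 cr by (simp add: E2_def)
    also have "\<dots> = (sc r \<union> edg T2)\<^sup>*" by (rule PI[OF pr gT2])
    also have "\<dots> = (sc r \<union> (edg T2)\<^sup>*)\<^sup>*" using rt_Un1[of "edg T2" "sc r"] by (simp add: Un_commute)
    also have "\<dots> = (sc r \<union> sc ?c)\<^sup>*" using cd_sc[OF pc cs2] by (simp add: T2_def)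
    also have "\<dots> = R"
    proof
      show "(sc r \<union> sc ?c)\<^sup>* \<subseteq> R"
        using rtrancl_mono[of "sc r \<union> sc ?c" R] rR cR part_rt[OF PR] by auto
      have "sc s \<union> sc r \<subseteq> (sc r \<union> sc ?c)\<^sup>*"
      proof
        fix z assume z: "z \<in> sc s \<union> sc r"
        then obtain x y where xy: "z = (x, y)" by (cases z)
        show "z \<in> (sc r \<union> sc ?c)\<^sup>*"
        proof (cases "z \<in> sc r")
          case True thus ?thesis by auto
        next
          case False
          hence "(x, y) \<in> sc s" using z xy by auto
          hence "(r x, r y) \<in> sc ?c" using sc_conj[OF pr] by blast
          moreover have "(x, r x) \<in> sc r" by (rule sc_step)
          moreover have "(r y, y) \<in> sc r" by (rule scr_sym[OF sc_step])
          ultimately show ?thesis using xy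
            by (meson UnCI r_into_rtrancl rtrancl_trans)
        qed
      qed
      thus "R \<subseteq> (sc r \<union> sc ?c)\<^sup>*" unfolding R_def using rtrancl_subset_rtrancl by blast
    qed
    finally show ?thesis .
  qed
  have hcx_eq: "hcx (sc ?p) E1 k = hcx (sc ?p) E2 k" if kn: "k < n" for k
  proof -
    let ?B = "R `` {k}"
    have Bb: "?B \<in> blocks R" using block_of[OF PR kn] by simp
    have Bsub: "?B \<subseteq> {..<n}" by (rule block_sub[OF PR Bb])
    have clos: "y \<in> ?B \<longleftrightarrow> z \<in> ?B" if "(y, z) \<in> R" for y z
      using that part_trans[OF PR] part_sym[OF PR] by (meson Image_singleton_iff)
    have sB: "s x \<in> ?B \<longleftrightarrow> x \<in> ?B" for x using clos[of x "s x"] sR sc_step[of x s] by auto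
    have rB: "r x \<in> ?B \<longleftrightarrow> x \<in> ?B" for x using clos[of x "r x"] rR sc_step[of x r] by auto
    have e1: "\<forall>(i, j)\<in>set T1. i \<in> ?B \<longleftrightarrow> j \<in> ?B"
    proof (clarify)
      fix i j assume "(i, j) \<in> set T1"
      hence "(i, j) \<in> sc r" using cd_sc[OF pr cs1] by (auto simp: T1_def edg_def)
      thus "i \<in> ?B \<longleftrightarrow> j \<in> ?B" using clos rR by auto
    qed
    have e2: "\<forall>(i, j)\<in>set T2. i \<in> ?B \<longleftrightarrow> j \<in> ?B"
    proof (clarify)
      fix i j assume "(i, j) \<in> set T2"
      hence "(i, j) \<in> sc ?c" using cd_sc[OF pc cs2] by (auto simp: T2_def edg_def)
      thus "i \<in> ?B \<longleftrightarrow> j \<in> ?B" using clos cR by auto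
    qed
    have PC1: "2 * nsel ?B E1 + cnt (sc s) ?B = nsel ?B T1 + cnt (sc ?p) ?B"
      using PC[OF ps gT1 e1 sB] tT1 by (simp add: E1_def)
    have PC2: "2 * nsel ?B E2 + cnt (sc r) ?B = nsel ?B T2 + cnt (sc ?p) ?B"
      using PC[OF pr gT2 e2 rB] tT2 cr by (simp add: E2_def)
    have C1: "nsel ?B T1 + cnt (sc r) ?B = card ?B"
      using cd_count[OF pr cs1 Bsub] e1 by (simp add: T1_def)
    have C2: "nsel ?B T2 + cnt (sc ?c) ?B = card ?B"
      using cd_count[OF pc cs2 Bsub] e2 by (simp add: T2_def)
    have C3: "cnt (sc ?c) ?B = cnt (sc s) ?B" by (rule cnt_conj[OF pr ps rB])
    have nn: "nsel ?B E1 = nsel ?B E2" using PC1 PC2 C1 C2 C3 by linarith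
    have H1: "hcx (sc ?p) E1 k + cnt (sc ?p) ?B = nsel ?B E1 + 1" using HC[OF P gE1 kn] Q1 by simp
    have H2: "hcx (sc ?p) E2 k + cnt (sc ?p) ?B = nsel ?B E2 + 1" using HC[OF P gE2 kn] Q2 by simp
    show ?thesis using H1 H2 nn by linarith
  qed
  have HH: "PT (hh (sc ?p) E1) = PT (hh (sc ?p) E2)"
    unfolding PT_def hh_def using Q1 Q2 hcx_eq by (auto intro!: ext prod.cong)
  have D1: "conf one N n r d1 = basis a" "supp d1" using deconf[OF pr d1] by auto
  have D2: "conf one N n s d2 = basis b" "supp d2" using deconf[OF ps d2] by auto
  have D3: "conf one N n ?c d3 = basis (act_vec r b)" "supp d3" using deconf[OF pc d3] by auto
  have D4: "conf one N n r d4 = basis a" "supp d4" using deconf[OF pr d4] by auto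
  have bc: "act_vec r b \<in> fixvecs one n ?c" by (rule act_fix[OF pr ps b])
  have Fb: "BS.F (ahat (sc s) b) B = BS.F (ahat (sc ?c) (act_vec r b)) B" if B: "B \<in> blocks R" for B
  proof -
    have Ps: "part (sc s)" by (rule part_sc[OF ps])
    have Pc: "part (sc ?c)" by (rule part_sc[OF pc])
    let ?J = "{Ob \<in> blocks (sc s). Ob \<subseteq> B}"
    have cl: "y \<in> B \<longleftrightarrow> z \<in> B" if "(y, z) \<in> R" for y z
      using that block_uniq[OF PR B] part_trans[OF PR] part_sym[OF PR] by (metis Image_singleton_iff)
    have rB: "r x \<in> B \<longleftrightarrow> x \<in> B" for x using cl[of x "r x"] rR sc_step[of x r] by auto
    have L: "BS.F (ahat (sc s) b) B = BS.F (\<lambda>Ob. del (b (Min Ob))) ?J"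
      unfolding block_Union[OF ps PR sR B] ahat_def
      by (rule BS.cong) (auto simp: F_min[OF Ps])
    have Jc: "{Ob \<in> blocks (sc ?c). Ob \<subseteq> B} = (\<lambda>Ob. r ` Ob) ` ?J"
      unfolding blocks_conj[OF pr ps] using rB by auto
    have inj: "inj_on (\<lambda>Ob. r ` Ob) ?J"
      using permutes_inj[OF pr] by (auto simp: inj_on_def inj_image_eq_iff)
    have "BS.F (ahat (sc ?c) (act_vec r b)) B = BS.F (\<lambda>Ob. del (act_vec r b (Min Ob))) {Ob \<in> blocks (sc ?c). Ob \<subseteq> B}"
      unfolding block_Union[OF pc PR cR B] ahat_def
      by (rule BS.cong) (auto simp: F_min[OF Pc])
    also have "\<dots> = BS.F (\<lambda>Ob. del (act_vec r b (Min (r ` Ob)))) ?J"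
      unfolding Jc by (simp add: BS.reindex[OF inj] o_def)
    also have "\<dots> = BS.F (\<lambda>Ob. del (b (Min Ob))) ?J"
    proof (rule BS.cong[OF refl])
      fix Ob assume Ob: "Ob \<in> ?J"
      have Obb: "Ob \<in> blocks (sc s)" using Ob by simp
      have fin: "finite Ob" "Ob \<noteq> {}" using block_finite[OF Ps Obb] block_ne[OF Ps Obb] by auto
      have m: "Min Ob \<in> Ob" using Min_in[OF fin] .
      have m2: "Min (r ` Ob) \<in> r ` Ob" using Min_in[of "r ` Ob"] fin by auto
      then obtain y where y: "y \<in> Ob" "Min (r ` Ob) = r y" by auto
      have mn: "Min Ob < n" using block_sub[OF Ps Obb] m by auto
      have "(Min Ob, y) \<in> sc s" using block_uniq[OF Ps Obb m] y(1) by auto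
      hence "b y = b (Min Ob)" by (rule fix_const[OF ps b _ mn])
      thus "del (act_vec r b (Min (r ` Ob))) = del (b (Min Ob))" using y(2) by (simp add: act_vec_def ir)
    qed
    finally show ?thesis using L by simp
  qed
  have conf_eq: "conf one N n ?p (mulC one N n (mulC one N n d1 d2) (Ftw one dual N n cs1 s)) z =
        conf one N n ?p (mulC one N n (mulC one N n d3 d4) (Ftw one dual N n cs2 r)) z" for z
  proof (cases "z \<in> fixvecs one n ?p")
    case False thus ?thesis by (simp add: conf_zero)
  next
    case True
    let ?ch = "PT (chat (sc ?p) z)"
    let ?H = "PT (hh (sc ?p) E1)"
    let ?Z = "mulC one N n ?ch ?H"
    have F1: "Ftw one dual N n cs1 s = OP E1" by (simp add: Ftw_def Fcalc_OP E1_def T1_def)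
    have F2: "Ftw one dual N n cs2 r = OP E2" by (simp add: Ftw_def Fcalc_OP E2_def T2_def)
    have rearr: "mulC one N n (mulC one N n D (OP E)) ?ch = mulC one N n (mulC one N n D ?ch) (OP E)" for D E
      by (simp add: mulC_assoc mulC_comm[of "OP E"])
    have rearr2: "mulC one N n (mulC one N n (mulC one N n x y) ?ch) H' = mulC one N n x (mulC one N n y (mulC one N n ?ch H'))" for x y H'
      by (simp add: mulC_assoc)
    have swap: "mulC one N n U (mulC one N n V W) = mulC one N n V (mulC one N n U W)" for U V W
      by (metis mulC_assoc mulC_comm)
    have "conf one N n ?p (mulC one N n (mulC one N n d1 d2) (Ftw one dual N n cs1 s)) z
       = Tlin (sc ?p) (mulC one N n (mulC one N n (mulC one N n d1 d2) ?ch) (OP E1))"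
      by (simp add: conf_Tlin[OF pp True] F1 rearr)
    also have "\<dots> = Tlin R (mulC one N n (mulC one N n (mulC one N n d1 d2) ?ch) ?H)"
      using Elim[OF P gE1] Q1 by simp
    also have "\<dots> = Tlin R (mulC one N n d1 (mulC one N n d2 ?Z))" by (simp only: rearr2)
    also have "\<dots> = Tlin R (mulC one N n (PT (ahat (sc r) a)) (mulC one N n d2 ?Z))"
      by (rule DC[OF pr PR rR D1(2) D1(1) a])
    also have "\<dots> = Tlin R (mulC one N n d2 (mulC one N n (PT (ahat (sc r) a)) ?Z))" by (simp only: swap)
    also have "\<dots> = Tlin R (mulC one N n (PT (ahat (sc s) b)) (mulC one N n (PT (ahat (sc r) a)) ?Z))"
      by (rule DC[OF ps PR sR D2(2) D2(1) b])
    also have "\<dots> = Tlin R (mulC one N n (PT (ahat (sc ?c) (act_vec r b))) (mulC one N n (PT (ahat (sc r) a)) ?Z))"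
      by (simp add: principle[OF PR] Fb)
    also have "\<dots> = Tlin R (mulC one N n d3 (mulC one N n (PT (ahat (sc r) a)) ?Z))"
      by (rule DC[OF pc PR cR D3(2) D3(1) bc, symmetric])
    also have "\<dots> = Tlin R (mulC one N n (PT (ahat (sc r) a)) (mulC one N n d3 ?Z))" by (simp only: swap)
    also have "\<dots> = Tlin R (mulC one N n d4 (mulC one N n d3 ?Z))"
      by (rule DC[OF pr PR rR D4(2) D4(1) a, symmetric])
    also have "\<dots> = Tlin R (mulC one N n d3 (mulC one N n d4 ?Z))" by (simp only: swap)
    also have "\<dots> = Tlin R (mulC one N n (mulC one N n (mulC one N n d3 d4) ?ch) (PT (hh (sc ?p) E2)))"
      by (simp only: rearr2 HH)
    also have "\<dots> = Tlin (sc ?p) (mulC one N n (mulC one N n (mulC one N n d3 d4) ?ch) (OP E2))"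
      using Elim[OF P gE2] Q2 by simp
    also have "\<dots> = conf one N n ?p (mulC one N n (mulC one N n d3 d4) (Ftw one dual N n cs2 r)) z"
      by (simp add: conf_Tlin[OF pp True] F2 rearr)
    finally show ?thesis .
  qed
  show ?thesis
    unfolding defect_prod_def cr ad_unit[OF pp] using conf_eq by auto
qed

end

theorem lemma4p18:
  fixes one :: "'l::finite" and dual :: "'l \<Rightarrow> 'l" and N :: "'l \<Rightarrow> 'l \<Rightarrow> 'l \<Rightarrow> nat"
    and n :: nat and \<rho> \<sigma> :: "nat \<Rightarrow> nat" and a b :: "nat \<Rightarrow> 'l"
    and d1 d2 d3 d4 :: "(nat \<Rightarrow> 'l) \<Rightarrow> int" and cs1 cs2 :: "nat list list"
  assumes "fusion_ring one dual N"
    and "n \<ge> 2"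
    and "\<rho> permutes {..<n}" and "\<sigma> permutes {..<n}"
    and "a \<in> fixvecs one n \<rho>" and "b \<in> fixvecs one n \<sigma>"
    and "is_deconf one N n \<rho> a d1" and "is_deconf one N n \<sigma> b d2"
    and "is_deconf one N n (\<rho> \<circ> \<sigma> \<circ> inv \<rho>) (act_vec \<rho> b) d3"
    and "is_deconf one N n \<rho> a d4"
    and "cycle_decomp n \<rho> cs1"
    and "cycle_decomp n (\<rho> \<circ> \<sigma> \<circ> inv \<rho>) cs2"
  shows "defect_prod one dual N n \<rho> \<sigma> d1 d2 cs1
       = defect_prod one dual N n (\<rho> \<circ> \<sigma> \<circ> inv \<rho>) \<rho> d3 d4 cs2"
proof -
  interpret FRn one dual N n by unfold_locales (rule assms(1))
  show ?thesis by (rule main[OF assms(3-12)])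
qed

end
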